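(* Let $D$ be a rank two filtered $(\varphi,N,L/K,E)$-module with $N\neq0$, with basis $\underline\eta$ such that $[\varphi]_{\underline\eta}=\mathrm{diag}(p\delta\cdot\vec1,\delta\cdot\vec1)$ ($\delta\in E^\times$), $[N]_{\underline\eta}=\begin{pmatrix}\vec0&\vec0\\ \vec1&\vec0\end{pmatrix}$, and filtration $\mathcal F(\vec x,\vec y;\underline k)$ with $k_i\ge0$. Then the $G$-action is given by $[g]_{\underline\eta}=\mathrm{diag}(\chi(g)\cdot\vec1,\chi(g)\cdot\vec1)$ for a single character $\chi:G\to E^\times$, and $D$ is weakly admissible if and only if $$2ef\,v_p(\delta)+ef=\sum_{i=0}^{m-1}k_i\quad\text{and}\quad ef\,v_p(\delta)\ge\sum_{\{i:x_i=0\}}k_i.$$ If $D$ is weakly admissible, it is irreducible if and only if the inequality is strict; if equality holds, $D_2=E^f\eta_2$ is its only nonzero proper weakly admissible sub-object.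
   Context: Setting: $p$ prime, $K/\mathbb{Q}_p$ finite, $L/K$ finite Galois, $G=\mathrm{Gal}(L/K)$, $L_0$ maximal unramified subfield of $L$, $f=[L_0:\mathbb{Q}_p]$, $e=[L:L_0]$, $m=ef$, $E$ finite over $\mathbb{Q}_p$ containing all embeddings of $L$; $v_p(p)=1$. $L_0\otimes E\cong E^f$, $L\otimes E\cong E^m$, $E^f\to E^m$ is $\vec a\mapsto\vec a^{\otimes e}$ ($e$ concatenated copies); $\varphi(x_0,\dots,x_{f-1})=(x_1,\dots,x_{f-1},x_0)$; $c\cdot\vec 1=(c,\dots,c)$; $G$ acts on $E^f$ via $g|_{L_0}$. A rank two filtered $(\varphi,N,L/K,E)$-module: free $E^f$-module $D$ of rank 2 with $\varphi$-semilinear bijection $\varphi$, nilpotent $E^f$-linear $N$ with $N\varphi=p\varphi N$, a filtration on $D_L=L\otimes_{L_0}D$, and a semilinear $E$-linear $G$-action commuting with $\varphi,N$ and preserving the filtration; matrices via $(T\eta_1,T\eta_2)=(\eta_1,\eta_2)[T]$. Filtration $\mathcal F(\vec x,\vec y;\underline k)$: $\mathrm{Fil}^jD_L=D_L$ ($j\le0$), $\mathrm{Fil}^jD_L=E^mf_{\{i:k_i\ge j\}}(\vec x(1\otimes\eta_1)+\vec y(1\otimes\eta_2))$ ($j\ge1$), $(x_i,y_i)\ne(0,0)$, $f_J=\sum_{s\in J}e_s$. $t_H(M)=\sum_s\sum_j j\dim_E(e_s\mathrm{Fil}^jM/e_s\mathrm{Fil}^{j+1}M)$; for a $\varphi$-stable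 free $D'$ with $[\varphi|_{D'}]=A$, $t_N(D')=e\,v_p(\prod_j(\det A)_j)$; $D'_L$ has the induced filtration. $D$ is weakly admissible if $t_H(D_L)=t_N(D)$ and $t_H(D'_L)\le t_N(D')$ for every $E^f$-submodule $D'$ stable under $\varphi$ and $N$. A weakly admissible sub-object is a nonzero submodule stable under $\varphi$, $N$, $G$ with $t_H(D'_L)=t_N(D')$; irreducible means no proper such sub-object. *)

theory Defs
  imports "HOL-Algebra.Group" "HOL-Library.Function_Algebras" "HOL-Library.Product_Plus"
    "Jordan_Normal_Form.Determinant"
begin

(* An element of E^n is a function nat => E vanishing at indices >= n.
   E^f = L_0 (x) E, E^m = L (x) E, m = e*f.  An element of D is a pair (a,b) meaning
   a*eta_1 + b*eta_2 (a,b in E^f); an element of D_L is a pair (c,d) meaning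
   c*(1(x)eta_1) + d*(1(x)eta_2) with c,d in E^m. *)

definition wvecs :: "nat \<Rightarrow> (nat \<Rightarrow> 'a::zero) set" where
  "wvecs n = {x. \<forall>i\<ge>n. x i = 0}"

definition wcst :: "nat \<Rightarrow> 'a::zero \<Rightarrow> nat \<Rightarrow> 'a" where
  "wcst n c = (\<lambda>i. if i < n then c else 0)"

text \<open>Frobenius-power action on E^f: shift by s; s = 1 is phi (x_0..x_{f-1}) = (x_1,..,x_{f-1},x_0)\<close>
definition wshift :: "nat \<Rightarrow> nat \<Rightarrow> (nat \<Rightarrow> 'a::zero) \<Rightarrow> nat \<Rightarrow> 'a" where
  "wshift f s x = (\<lambda>i. if i < f then x ((i + s) mod f) else 0)"

text \<open>the map E^f -> E^m, a |-> a^{(x) e} (e concatenated copies), m = e f\<close>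
definition wtens :: "nat \<Rightarrow> nat \<Rightarrow> (nat \<Rightarrow> 'a::zero) \<Rightarrow> nat \<Rightarrow> 'a" where
  "wtens f m x = (\<lambda>i. if i < m then x (i mod f) else 0)"

definition wD :: "nat \<Rightarrow> ((nat \<Rightarrow> 'a::zero) \<times> (nat \<Rightarrow> 'a)) set" where
  "wD f = wvecs f \<times> wvecs f"

definition wsmult :: "(nat \<Rightarrow> 'a::times) \<Rightarrow> (nat \<Rightarrow> 'a) \<times> (nat \<Rightarrow> 'a) \<Rightarrow> (nat \<Rightarrow> 'a) \<times> (nat \<Rightarrow> 'a)" where
  "wsmult a u = (a * fst u, a * snd u)"

text \<open>phi with [phi]_eta = diag(p delta, delta), semilinear\<close>
definition wphi :: "nat \<Rightarrow> nat \<Rightarrow> 'a::comm_ring_1 \<Rightarrow> (nat \<Rightarrow> 'a) \<times> (nat \<Rightarrow> 'a) \<Rightarrow> (nat \<Rightarrow> 'a) \<times> (nat \<Rightarrow> 'a)" where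
  "wphi p f \<delta> u = (wcst f (of_nat p * \<delta>) * wshift f 1 (fst u), wcst f \<delta> * wshift f 1 (snd u))"

text \<open>N with [N]_eta = ((0,0),(1,0)), i.e. N eta_1 = eta_2, N eta_2 = 0\<close>
definition wN :: "(nat \<Rightarrow> 'a::zero) \<times> (nat \<Rightarrow> 'a) \<Rightarrow> (nat \<Rightarrow> 'a) \<times> (nat \<Rightarrow> 'a)" where
  "wN u = (0, fst u)"

definition wsubmod :: "nat \<Rightarrow> ((nat \<Rightarrow> 'a::comm_ring_1) \<times> (nat \<Rightarrow> 'a)) set \<Rightarrow> bool" where
  "wsubmod f S \<longleftrightarrow> S \<subseteq> wD f \<and> 0 \<in> S \<and> (\<forall>u\<in>S. \<forall>w\<in>S. u + w \<in> S)
     \<and> (\<forall>a\<in>wvecs f. \<forall>u\<in>S. wsmult a u \<in> S)"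

definition wbasis :: "nat \<Rightarrow> ((nat \<Rightarrow> 'a::comm_ring_1) \<times> (nat \<Rightarrow> 'a)) set \<Rightarrow> nat
    \<Rightarrow> (nat \<Rightarrow> (nat \<Rightarrow> 'a) \<times> (nat \<Rightarrow> 'a)) \<Rightarrow> bool" where
  "wbasis f S r bs \<longleftrightarrow> (\<forall>j<r. bs j \<in> S)
     \<and> S = {\<Sum>j<r. wsmult (c j) (bs j) | c. \<forall>j<r. c j \<in> wvecs f}
     \<and> (\<forall>c. (\<forall>j<r. c j \<in> wvecs f) \<and> (\<Sum>j<r. wsmult (c j) (bs j)) = 0 \<longrightarrow> (\<forall>j<r. c j = 0))"

text \<open>A is the matrix of phi|_S in the basis bs: (phi b_1,..,phi b_r) = (b_1,..,b_r) A\<close>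
definition wmatrix :: "nat \<Rightarrow> nat \<Rightarrow> 'a::comm_ring_1 \<Rightarrow> nat \<Rightarrow> (nat \<Rightarrow> (nat \<Rightarrow> 'a) \<times> (nat \<Rightarrow> 'a))
    \<Rightarrow> (nat \<Rightarrow> nat \<Rightarrow> nat \<Rightarrow> 'a) \<Rightarrow> bool" where
  "wmatrix p f \<delta> r bs A \<longleftrightarrow> (\<forall>i<r. \<forall>j<r. A i j \<in> wvecs f)
     \<and> (\<forall>j<r. wphi p f \<delta> (bs j) = (\<Sum>i<r. wsmult (A i j) (bs i)))"

definition wtN :: "('a::comm_ring_1 \<Rightarrow> rat) \<Rightarrow> nat \<Rightarrow> nat \<Rightarrow> nat \<Rightarrow> (nat \<Rightarrow> nat \<Rightarrow> nat \<Rightarrow> 'a) \<Rightarrow> rat" where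
  "wtN v e f r A = of_nat e * v (\<Prod>l<f. det (mat r r (\<lambda>(i,j). A i j l)))"

text \<open>D'_L = L (x)_{L_0} D' inside D_L: the E^m-span of the image of D'\<close>
definition wL :: "nat \<Rightarrow> nat \<Rightarrow> ((nat \<Rightarrow> 'a::comm_ring_1) \<times> (nat \<Rightarrow> 'a)) set \<Rightarrow> ((nat \<Rightarrow> 'a) \<times> (nat \<Rightarrow> 'a)) set" where
  "wL f m S = {\<Sum>j<n. wsmult (c j) (wtens f m (fst (w j)), wtens f m (snd (w j))) | (n::nat) c w.
       \<forall>j<n. c j \<in> wvecs m \<and> w j \<in> S}"

definition wFil :: "nat \<Rightarrow> (nat \<Rightarrow> int) \<Rightarrow> (nat \<Rightarrow> 'a::comm_ring_1) \<Rightarrow> (nat \<Rightarrow> 'a) \<Rightarrow> int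
    \<Rightarrow> ((nat \<Rightarrow> 'a) \<times> (nat \<Rightarrow> 'a)) set" where
  "wFil m k x y j = (if j \<le> 0 then wvecs m \<times> wvecs m
     else {wsmult (c * (\<lambda>i. if i < m \<and> k i \<ge> j then 1 else 0)) (x, y) | c. c \<in> wvecs m})"

definition wsc2 :: "'a::field \<Rightarrow> 'a \<times> 'a \<Rightarrow> 'a \<times> 'a" where
  "wsc2 c u = (c * fst u, c * snd u)"

text \<open>dim_E e_s M (e_s-component of D_L is E eta_1 + E eta_2 = E^2)\<close>
definition wdimc :: "nat \<Rightarrow> ((nat \<Rightarrow> 'a::field) \<times> (nat \<Rightarrow> 'a)) set \<Rightarrow> nat" where
  "wdimc s M = vector_space.dim wsc2 ((\<lambda>u. (fst u s, snd u s)) ` M)"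

text \<open>t_H(M) = sum_s sum_j j dim_E(e_s Fil^j M / e_s Fil^{j+1} M), with the induced filtration
  Fil^j M = M \<inter> Fil^j D_L; the inner sum is over the (finite) support of the summand.\<close>
definition wtH :: "nat \<Rightarrow> (nat \<Rightarrow> int) \<Rightarrow> (nat \<Rightarrow> 'a::field) \<Rightarrow> (nat \<Rightarrow> 'a)
    \<Rightarrow> ((nat \<Rightarrow> 'a) \<times> (nat \<Rightarrow> 'a)) set \<Rightarrow> int" where
  "wtH m k x y M = (\<Sum>s<m. let t = (\<lambda>j. j * (int (wdimc s (M \<inter> wFil m k x y j))
                                        - int (wdimc s (M \<inter> wFil m k x y (j + 1)))))
                          in (\<Sum>j\<in>{j. t j \<noteq> 0}. t j))"

definition wweakly_admissible :: "('a::field \<Rightarrow> rat) \<Rightarrow> nat \<Rightarrow> 'a \<Rightarrow> nat \<Rightarrow> nat \<Rightarrow> (nat \<Rightarrow> int)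
    \<Rightarrow> (nat \<Rightarrow> 'a) \<Rightarrow> (nat \<Rightarrow> 'a) \<Rightarrow> bool" where
  "wweakly_admissible v p \<delta> e f k x y \<longleftrightarrow>
     (\<forall>r bs A. wbasis f (wD f) r bs \<and> wmatrix p f \<delta> r bs A \<longrightarrow>
        of_int (wtH (e*f) k x y (wL f (e*f) (wD f))) = wtN v e f r A)
   \<and> (\<forall>S. wsubmod f S \<and> wphi p f \<delta> ` S \<subseteq> S \<and> wN ` S \<subseteq> S \<longrightarrow>
        (\<forall>r bs A. wbasis f S r bs \<and> wmatrix p f \<delta> r bs A \<longrightarrow>
           of_int (wtH (e*f) k x y (wL f (e*f) S)) \<le> wtN v e f r A))"

definition wwa_sub :: "('a::field \<Rightarrow> rat) \<Rightarrow> nat \<Rightarrow> 'a \<Rightarrow> nat \<Rightarrow> nat \<Rightarrow> (nat \<Rightarrow> int)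
    \<Rightarrow> (nat \<Rightarrow> 'a) \<Rightarrow> (nat \<Rightarrow> 'a) \<Rightarrow> 'g set
    \<Rightarrow> ('g \<Rightarrow> (nat \<Rightarrow> 'a) \<times> (nat \<Rightarrow> 'a) \<Rightarrow> (nat \<Rightarrow> 'a) \<times> (nat \<Rightarrow> 'a))
    \<Rightarrow> ((nat \<Rightarrow> 'a) \<times> (nat \<Rightarrow> 'a)) set \<Rightarrow> bool" where
  "wwa_sub v p \<delta> e f k x y Gc gact S \<longleftrightarrow>
     wsubmod f S \<and> S \<noteq> {0} \<and> wphi p f \<delta> ` S \<subseteq> S \<and> wN ` S \<subseteq> S
     \<and> (\<forall>g\<in>Gc. gact g ` S \<subseteq> S)
     \<and> (\<exists>r bs A. wbasis f S r bs \<and> wmatrix p f \<delta> r bs A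
          \<and> of_int (wtH (e*f) k x y (wL f (e*f) S)) = wtN v e f r A)"

definition wirreducible where
  "wirreducible v p \<delta> e f k x y Gc gact \<longleftrightarrow>
     \<not> (\<exists>S. wwa_sub v p \<delta> e f k x y Gc gact S \<and> S \<noteq> wD f)"

text \<open>extension of the G-action to D_L = L (x)_{L_0} D: g (c eta_1 + d eta_2) = g(c) g(eta_1) + g(d) g(eta_2),
  where g acts on E^m = L (x) E by permuting coordinates (embeddings) via pi g\<close>
definition wgactL where
  "wgactL f m (prm :: 'g \<Rightarrow> nat \<Rightarrow> nat) gact g u =
     (let pc = (\<lambda>c i. if i < m then c (prm g i) else 0);
          c1 = gact g (wcst f 1, 0); c2 = gact g (0, wcst f 1)
      in wsmult (pc (fst u)) (wtens f m (fst c1), wtens f m (snd c1))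
         + wsmult (pc (snd u)) (wtens f m (fst c2), wtens f m (snd c2)))"

end

theory Submission imports Defs begin

lemma det1: "det (mat 1 1 g) = (g (0,0) :: 'a::comm_ring_1)"
  apply (subst laplace_expansion_column[of _ 1 0]) apply auto
  apply (simp add: cofactor_def)
  apply (subst det_dim_zero) apply (auto simp: mat_delete_def)
  done

lemma det2: "det (mat 2 2 g) = (g (0,0) * g(1,1) - g(0,1) * g(1,0) :: 'a::comm_ring_1)"
  apply (subst laplace_expansion_column[of _ 2 0]) apply auto
  apply (simp add: cofactor_def numeral_2_eq_2)
  apply (subst (1 2) laplace_expansion_column[of _ 1 0]) apply (auto simp: mat_delete_def cofactor_def)
  done

lemma det0: "det (mat 0 0 g) = (1 :: 'a::comm_ring_1)"
  by (rule det_dim_zero) auto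

interpretation W: vector_space "wsc2 :: 'a::field \<Rightarrow> 'a \<times> 'a \<Rightarrow> 'a \<times> 'a"
  by unfold_locales (auto simp: wsc2_def algebra_simps)

lemma W_span_basis: "W.span {(1::'a::field,0),(0,1)} = UNIV"
proof -
  have "(a,b) \<in> W.span {(1::'a,0),(0,1)}" for a b
  proof -
    have "(a,b) = wsc2 a (1,0) + wsc2 b (0,1)" by (simp add: wsc2_def)
    moreover have "wsc2 a (1,0) + wsc2 b (0,1) \<in> W.span {(1::'a,0),(0,1)}"
      by (intro W.span_add W.span_scale W.span_base) auto
    ultimately show ?thesis by simp
  qed
  then show ?thesis by auto
qed

lemma W_indep_basis: "W.independent {(1::'a::field,0),(0,1)}"
proof
  assume "W.dependent {(1::'a,0),(0,1)}"
  then obtain u where u: "\<exists>v\<in>{(1::'a,0),(0,1)}. u v \<noteq> 0"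
    "(\<Sum>v\<in>{(1::'a,0),(0,1)}. wsc2 (u v) v) = 0"
    using W.dependent_finite[of "{(1::'a,0),(0,1)}"] by auto
  have ne: "(1::'a,0::'a) \<noteq> (0,1)" by simp
  from u(2) have "(u (1,0), u (0,1)) = (0::'a,0::'a)" using ne by (simp add: wsc2_def zero_prod_def)
  with u(1) show False by auto
qed

interpretation W: finite_dimensional_vector_space "wsc2 :: 'a::field \<Rightarrow> 'a \<times> 'a \<Rightarrow> 'a \<times> 'a" "{(1,0),(0,1)}"
  by unfold_locales (auto simp: W_span_basis W_indep_basis)

lemma W_dim_UNIV: "W.dim (UNIV :: ('a::field \<times> 'a) set) = 2"
  by simp

lemma W_dim_line: "(w::'a::field\<times>'a) \<noteq> 0 \<Longrightarrow> W.dim (range (\<lambda>t. wsc2 t w)) = 1"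
  by (metis W.dim_singleton W.dim_span W.span_singleton)

lemma W_dim_zero: "W.dim {0::'a::field\<times>'a} = 0"
  by simp

definition prj :: "nat \<Rightarrow> (nat \<Rightarrow> 'a) \<times> (nat \<Rightarrow> 'a) \<Rightarrow> 'a \<times> 'a" where
  "prj l u = (fst u l, snd u l)"

lemma fun_sum_apply: "(\<Sum>j\<in>A. g j) (i::nat) = (\<Sum>j\<in>A. g j i :: 'a::comm_monoid_add)"
  by (induct A rule: infinite_finite_induct) auto

lemma prj_add[simp]: "prj l (u + w) = prj l u + prj l w" by (simp add: prj_def)
lemma prj_zero[simp]: "prj l 0 = (0 :: 'a::zero \<times> 'a)" by (simp add: prj_def zero_prod_def)
lemma prj_sum: "prj l (\<Sum>j\<in>A. F j) = (\<Sum>j\<in>A. prj l (F j) :: 'a::comm_monoid_add \<times> 'a)"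
  by (simp add: prj_def fst_sum snd_sum fun_sum_apply sum_prod)
lemma prj_wsmult[simp]: "prj l (wsmult c u) = wsc2 (c l) (prj l (u::(nat\<Rightarrow>'a::field)\<times>_))"
  by (simp add: prj_def wsmult_def wsc2_def)
lemma pair_eq_prj: "u = w \<longleftrightarrow> (\<forall>i. prj i u = prj i w)"
  by (cases u; cases w) (auto simp: prj_def fun_eq_iff)
lemma wdimc_prj: "wdimc s M = W.dim (prj s ` M)"
proof -
  have "(\<lambda>u. (fst u s, snd u s)) = prj s" by (rule ext) (simp add: prj_def)
  then show ?thesis unfolding wdimc_def by metis
qed

lemma wsc2_zero[simp]: "wsc2 0 u = (0::'a::field\<times>'a)" by (simp add: wsc2_def zero_prod_def)
lemma wsc2_zero2[simp]: "wsc2 c 0 = (0::'a::field\<times>'a)" by (simp add: wsc2_def zero_prod_def)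

lemma wsc2_one[simp]: "wsc2 1 u = (u::'a::field\<times>'a)" by (simp add: wsc2_def)
lemma wsc2_neg1: "wsc2 (-1) u = - (u::'a::field\<times>'a)" by (cases u) (simp add: wsc2_def)

lemma wvecs_single: "l < n \<Longrightarrow> (\<lambda>i. if i = l then t else 0) \<in> wvecs n"
  by (auto simp: wvecs_def)

lemma wbasis_mem: "wbasis f S r bs \<Longrightarrow> j < r \<Longrightarrow> bs j \<in> S"
  unfolding wbasis_def by blast
lemma wbasis_eq: assumes "wbasis f S r bs" shows "S = {\<Sum>j<r. wsmult (c j) (bs j) | c. \<forall>j<r. c j \<in> wvecs f}"
  using assms unfolding wbasis_def by (rule conjunct1[OF conjunct2])
lemma wbasis_ind: assumes "wbasis f S r bs" "\<forall>j<r. c j \<in> wvecs f" "(\<Sum>j<r. wsmult (c j) (bs j)) = 0" "j < r"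
  shows "c j = 0"
proof -
  have H: "\<forall>c. (\<forall>j<r. c j \<in> wvecs f) \<and> (\<Sum>j<r. wsmult (c j) (bs j)) = 0 \<longrightarrow> (\<forall>j<r. c j = 0)"
    using assms(1) unfolding wbasis_def by (rule conjunct2[OF conjunct2])
  then have "(\<forall>j<r. c j \<in> wvecs f) \<and> (\<Sum>j<r. wsmult (c j) (bs j)) = 0 \<longrightarrow> (\<forall>j<r. c j = 0)" by (rule spec)
  then show ?thesis using assms(2-4) by blast
qed

lemma basis_indep:
  fixes bs :: "nat \<Rightarrow> (nat \<Rightarrow> 'a::field) \<times> (nat \<Rightarrow> 'a)"
  assumes B: "wbasis f S r bs" and l: "l < f"
    and sum0: "(\<Sum>j<r. wsc2 (\<gamma> j) (prj l (bs j))) = 0" and j: "j < r"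
  shows "\<gamma> j = 0"
proof -
  define c where "c = (\<lambda>j i. if i = l then \<gamma> j else (0::'a))"
  have cv: "\<forall>j<r. c j \<in> wvecs f" using l by (auto simp: c_def wvecs_def)
  have "(\<Sum>j<r. wsmult (c j) (bs j)) = 0"
    unfolding pair_eq_prj
  proof
    fix i
    show "prj i (\<Sum>j<r. wsmult (c j) (bs j)) = prj i 0"
    proof (cases "i = l")
      case True then show ?thesis using sum0 by (simp add: prj_sum c_def)
    next
      case False then show ?thesis by (simp add: prj_sum c_def)
    qed
  qed
  from wbasis_ind[OF B cv this j] have "c j = 0" .
  then show ?thesis by (metis c_def zero_fun_apply)
qed

lemma basis_span:
  fixes bs :: "nat \<Rightarrow> (nat \<Rightarrow> 'a::field) \<times> (nat \<Rightarrow> 'a)"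
  assumes B: "wbasis f S r bs" and u: "u \<in> S"
  shows "\<exists>\<gamma>. prj l u = (\<Sum>j<r. wsc2 (\<gamma> j) (prj l (bs j)))"
proof -
  from wbasis_eq[OF B] u obtain c where "u = (\<Sum>j<r. wsmult (c j) (bs j))" by blast
  then have "prj l u = (\<Sum>j<r. wsc2 (c j l) (prj l (bs j)))" by (simp add: prj_sum)
  then show ?thesis by (rule exI[of _ "\<lambda>j. c j l"])
qed

lemma wcst_vec: "wcst n c \<in> wvecs n" by (simp add: wcst_def wvecs_def)

lemma basis_span2:
  fixes bs :: "nat \<Rightarrow> (nat \<Rightarrow> 'a::field) \<times> (nat \<Rightarrow> 'a)"
  assumes B: "wbasis f S r bs" and l: "l < f"
  shows "(\<Sum>j<r. wsc2 (\<gamma> j) (prj l (bs j))) \<in> prj l ` S"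
proof -
  let ?u = "(\<Sum>j<r. wsmult (wcst f (\<gamma> j)) (bs j))"
  have "?u \<in> {\<Sum>j<r. wsmult (c j) (bs j) | c. \<forall>j<r. c j \<in> wvecs f}"
    by (rule CollectI, rule exI[of _ "\<lambda>j. wcst f (\<gamma> j)"]) (simp add: wcst_vec)
  then have u: "?u \<in> S" using wbasis_eq[OF B] by (rule ssubst[rotated])
  have e: "prj l ?u = (\<Sum>j<r. wsc2 (\<gamma> j) (prj l (bs j)))"
    using l by (simp add: prj_sum wcst_def)
  from imageI[OF u, of "prj l"] show ?thesis unfolding e .
qed

lemma basis_rank:
  fixes bs :: "nat \<Rightarrow> (nat \<Rightarrow> 'a::field) \<times> (nat \<Rightarrow> 'a)"
  assumes B: "wbasis f S r bs" and l: "l < f"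
  shows "r = W.dim (prj l ` S)"
proof -
  define b where "b = (\<lambda>j. prj l (bs j))"
  have inj: "inj_on b {..<r}"
  proof (rule inj_onI, rule ccontr)
    fix i j assume i: "i \<in> {..<r}" and j: "j \<in> {..<r}" and eq: "b i = b j" and ne: "i \<noteq> j"
    define \<gamma> where "\<gamma> = (\<lambda>t. if t = i then 1 else if t = j then -1 else (0::'a))"
    have "\<And>t. wsc2 (\<gamma> t) (b t) = (if t = i then b i else 0) + (if t = j then - b j else 0)"
      using ne by (auto simp: \<gamma>_def wsc2_one wsc2_neg1)
    then have "(\<Sum>t<r. wsc2 (\<gamma> t) (b t)) = b i - b j"
      using i j by (simp add: sum.distrib)
    then have "(\<Sum>t<r. wsc2 (\<gamma> t) (prj l (bs t))) = 0" using eq by (simp add: b_def)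
    from basis_indep[OF B l this] i have "\<gamma> i = 0" by auto
    then show False by (simp add: \<gamma>_def)
  qed
  have ind: "W.independent (b ` {..<r})"
  proof
    assume "W.dependent (b ` {..<r})"
    then obtain u where u: "\<exists>v\<in>b ` {..<r}. u v \<noteq> 0" "(\<Sum>v\<in>b ` {..<r}. wsc2 (u v) v) = 0"
      using W.dependent_finite[of "b ` {..<r}"] by auto
    from u(2) have "(\<Sum>j<r. wsc2 (u (b j)) (b j)) = 0"
      by (simp add: sum.reindex[OF inj])
    then have "(\<Sum>j<r. wsc2 (u (b j)) (prj l (bs j))) = 0" unfolding b_def .
    from basis_indep[OF B l this] have "\<forall>j<r. u (b j) = 0" by blast
    with u(1) show False by auto
  qed
  have sp: "W.span (b ` {..<r}) = prj l ` S"
  proof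
    show "W.span (b ` {..<r}) \<subseteq> prj l ` S"
    proof
      fix w assume "w \<in> W.span (b ` {..<r})"
      then obtain u where "w = (\<Sum>v\<in>b ` {..<r}. wsc2 (u v) v)"
        using W.span_finite[of "b ` {..<r}"] by auto
      then have "w = (\<Sum>j<r. wsc2 (u (b j)) (b j))"
        by (simp add: sum.reindex[OF inj])
      then have "w = (\<Sum>j<r. wsc2 (u (b j)) (prj l (bs j)))" unfolding b_def .
      then show "w \<in> prj l ` S" using basis_span2[OF B l] by simp
    qed
  next
    show "prj l ` S \<subseteq> W.span (b ` {..<r})"
    proof
      fix w assume "w \<in> prj l ` S"
      then obtain u where u: "u \<in> S" "w = prj l u" by auto
      from basis_span[OF B u(1)] obtain \<gamma> where "prj l u = (\<Sum>j<r. wsc2 (\<gamma> j) (b j))"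
        unfolding b_def by blast
      then have "w = (\<Sum>j<r. wsc2 (\<gamma> j) (b j))" using u by simp
      moreover have "(\<Sum>j<r. wsc2 (\<gamma> j) (b j)) \<in> W.span (b ` {..<r})"
        by (intro W.span_sum W.span_scale W.span_base) auto
      ultimately show "w \<in> W.span (b ` {..<r})" by simp
    qed
  qed
  have "W.dim (prj l ` S) = card (b ` {..<r})"
    using sp W.dim_span_eq_card_independent[OF ind] by simp
  also have "\<dots> = r" using card_image[OF inj] by simp
  finally show ?thesis by simp
qed

lemma wmatrix_rel: assumes "wmatrix p f \<delta> r bs A" "j < r"
  shows "wphi p f \<delta> (bs j) = (\<Sum>i<r. wsmult (A i j) (bs i))"
  using assms unfolding wmatrix_def by blast

lemma prj_wphi: "l < f \<Longrightarrow> prj l (wphi p f \<delta> u) = (of_nat p * \<delta> * fst u (Suc l mod f), \<delta> * snd u (Suc l mod f))"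
  by (simp add: prj_def wphi_def wcst_def wshift_def)

lemma prod_rot: assumes "0 < (f::nat)" shows "(\<Prod>l<f. g (Suc l mod f)) = (\<Prod>l<f. g l :: 'a::comm_monoid_mult)"
proof (rule prod.reindex_bij_witness[where j="\<lambda>a. Suc a mod f" and i="\<lambda>b. (b + f - 1) mod f"])
  fix a assume a: "a \<in> {..<f}"
  show "(Suc a mod f + f - 1) mod f = a"
  proof (cases "Suc a < f")
    case True then show ?thesis using a by simp
  next
    case False then have "Suc a = f" using a by simp
    then show ?thesis by simp
  qed
  show "Suc a mod f \<in> {..<f}" using assms by simp
next
  fix b assume b: "b \<in> {..<f}"
  show "Suc ((b + f - 1) mod f) mod f = b"
  proof (cases b)
    case 0 then show ?thesis using assms by (cases f) auto
  next
    case (Suc c) then have "(b + f - 1) mod f = c" using b by (simp add: mod_add_right_eq[symmetric])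
    then show ?thesis using b Suc by simp
  qed
  show "(b + f - 1) mod f \<in> {..<f}" using assms by simp
qed simp

lemma prod_nz: "(\<forall>l<(f::nat). g l \<noteq> (0::'a::field)) \<Longrightarrow> (\<Prod>l<f. g l) \<noteq> 0"
  by (induct f) auto

lemma cancel_rot:
  fixes g h :: "nat \<Rightarrow> 'a::field"
  assumes f: "0 < f" and nz: "\<forall>l<f. g l \<noteq> 0" and eq: "\<forall>l<f. c * g (Suc l mod f) = h l * g l"
  shows "(\<Prod>l<f. h l) = c ^ f"
proof -
  have "(\<Prod>l<f. c * g (Suc l mod f)) = (\<Prod>l<f. h l * g l)" using eq by (intro prod.cong) auto
  then have "c ^ f * (\<Prod>l<f. g l) = (\<Prod>l<f. h l) * (\<Prod>l<f. g l)"
    by (simp add: prod.distrib prod_rot[OF f])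
  moreover have "(\<Prod>l<f. g l) \<noteq> 0" using nz by (rule prod_nz)
  ultimately show ?thesis by simp
qed

lemma prj_D2:
  assumes l: "l < f"
  shows "prj l ` {(0, b) | b. b \<in> wvecs f} = range (\<lambda>t. wsc2 t (0::'a::field, 1))"
proof
  show "prj l ` {(0, b) | b. b \<in> wvecs f} \<subseteq> range (\<lambda>t. wsc2 t (0::'a::field, 1))"
    by (auto simp: prj_def wsc2_def)
next
  show "range (\<lambda>t. wsc2 t (0::'a::field, 1)) \<subseteq> prj l ` {(0, b) | b. b \<in> wvecs f}"
  proof
    fix w assume "w \<in> range (\<lambda>t. wsc2 t (0::'a::field, 1))"
    then obtain t where w: "w = (0, t)" by (auto simp: wsc2_def)
    have "(0, wcst f t) \<in> {(0, b) | b. b \<in> wvecs f}" by (auto simp: wcst_vec)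
    moreover have "w = prj l (0, wcst f t)" using w l by (auto simp: prj_def wcst_def)
    ultimately show "w \<in> prj l ` {(0, b) | b. b \<in> wvecs f}" by (rule image_eqI[rotated])
  qed
qed

lemma prj_D:
  assumes l: "l < f"
  shows "prj l ` wD f = (UNIV :: ('a::field \<times> 'a) set)"
proof -
  have "(a,b) \<in> prj l ` wD f" for a b :: 'a
  proof -
    have "((\<lambda>i. if i = l then a else 0), (\<lambda>i. if i = l then b else 0)) \<in> wD f"
      using l by (auto simp: wD_def wvecs_def)
    moreover have "(a,b) = prj l ((\<lambda>i. if i = l then a else 0), (\<lambda>i. if i = l then b else 0))"
      by (simp add: prj_def)
    ultimately show ?thesis by (rule image_eqI[rotated])
  qed
  then show ?thesis by auto
qed

lemma tN_D2:
  fixes bs :: "nat \<Rightarrow> (nat \<Rightarrow> 'a::field) \<times> (nat \<Rightarrow> 'a)"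
  assumes f: "0 < f" and B: "wbasis f {(0, b) | b. b \<in> wvecs f} r bs" and M: "wmatrix p f \<delta> r bs A"
  shows "r = 1 \<and> (\<Prod>l<f. A 0 0 l) = \<delta> ^ f"
proof -
  let ?D2 = "{(0, b) | b. b \<in> wvecs f} :: ((nat \<Rightarrow> 'a) \<times> (nat \<Rightarrow> 'a)) set"
  have r: "r = 1"
    using basis_rank[OF B f] W_dim_line[of "(0::'a,1::'a)"] unfolding prj_D2[OF f] by (simp add: zero_prod_def)
  have b0: "bs 0 \<in> ?D2" using wbasis_mem[OF B] r by simp
  then have fst0: "fst (bs 0) = 0" by auto
  define \<beta> where "\<beta> = snd (bs 0)"
  have nz: "\<forall>l<f. \<beta> l \<noteq> 0"
  proof (intro allI impI)
    fix l assume l: "l < f"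
    have "(0::'a, 1::'a) \<in> prj l ` ?D2" unfolding prj_D2[OF l] using rangeI[of "\<lambda>t. wsc2 t (0::'a,1::'a)" 1] by simp
    then obtain u where u: "(0::'a, 1::'a) = prj l u" "u \<in> ?D2" by (rule imageE)
    from basis_span[OF B u(2), of l] obtain \<gamma> where "prj l u = (\<Sum>j<r. wsc2 (\<gamma> j) (prj l (bs j)))" by blast
    with u r have "(0::'a, 1::'a) = wsc2 (\<gamma> 0) (prj l (bs 0))" by simp
    then have "\<gamma> 0 * \<beta> l = 1" by (simp add: wsc2_def prj_def \<beta>_def)
    then show "\<beta> l \<noteq> 0" by auto
  qed
  have eq: "\<forall>l<f. \<delta> * \<beta> (Suc l mod f) = A 0 0 l * \<beta> l"
  proof (intro allI impI)
    fix l assume l: "l < f"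
    have "wphi p f \<delta> (bs 0) = wsmult (A 0 0) (bs 0)" using wmatrix_rel[OF M, of 0] r by simp
    then have "prj l (wphi p f \<delta> (bs 0)) = prj l (wsmult (A 0 0) (bs 0))" by simp
    then have "(of_nat p * \<delta> * fst (bs 0) (Suc l mod f), \<delta> * \<beta> (Suc l mod f)) = wsc2 (A 0 0 l) (prj l (bs 0))"
      using l by (simp add: prj_wphi \<beta>_def)
    then show "\<delta> * \<beta> (Suc l mod f) = A 0 0 l * \<beta> l"
      by (simp add: \<beta>_def prj_def wsc2_def)
  qed
  show ?thesis using r cancel_rot[OF f nz eq] by simp
qed

lemma tN_D:
  fixes bs :: "nat \<Rightarrow> (nat \<Rightarrow> 'a::field) \<times> (nat \<Rightarrow> 'a)"
  assumes f: "0 < f" and B: "wbasis f (wD f) r bs" and M: "wmatrix p f \<delta> r bs A"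
  shows "r = 2 \<and> (\<Prod>l<f. A 0 0 l * A 1 1 l - A 0 1 l * A 1 0 l) = (of_nat p * \<delta> * \<delta>) ^ f"
proof -
  have r: "r = 2"
    using basis_rank[OF B f] unfolding prj_D[OF f] by simp
  define dB where "dB = (\<lambda>l. fst (bs 0) l * snd (bs 1) l - fst (bs 1) l * snd (bs 0) l)"
  have nz: "\<forall>l<f. dB l \<noteq> 0"
  proof (intro allI impI)
    fix l assume l: "l < f"
    have ex: "\<exists>\<gamma>::nat\<Rightarrow>'a. w = wsc2 (\<gamma> 0) (prj l (bs 0)) + wsc2 (\<gamma> 1) (prj l (bs 1))" for w
    proof -
      have "w \<in> prj l ` wD f" unfolding prj_D[OF l] by simp
      then obtain u where u: "w = prj l u" "u \<in> wD f" by (rule imageE)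
      from basis_span[OF B u(2), of l] obtain \<gamma> where "prj l u = (\<Sum>j<r. wsc2 (\<gamma> j) (prj l (bs j)))" by blast
      with u r have "w = wsc2 (\<gamma> 0) (prj l (bs 0)) + wsc2 (\<gamma> 1) (prj l (bs 1))"
        by (simp add: numeral_2_eq_2)
      then show ?thesis by blast
    qed
    obtain c :: "nat \<Rightarrow> 'a" where c: "(1::'a, 0::'a) = wsc2 (c 0) (prj l (bs 0)) + wsc2 (c 1) (prj l (bs 1))" using ex[of "(1,0)"] by blast
    obtain d :: "nat \<Rightarrow> 'a" where d: "(0::'a, 1::'a) = wsc2 (d 0) (prj l (bs 0)) + wsc2 (d 1) (prj l (bs 1))" using ex[of "(0,1)"] by blast
    define a0 where "a0 = fst (bs 0) l"
    define a1 where "a1 = fst (bs 1) l"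
    define s0 where "s0 = snd (bs 0) l"
    define s1 where "s1 = snd (bs 1) l"
    have e1: "c 0 * a0 + c 1 * a1 = 1" and e2: "c 0 * s0 + c 1 * s1 = 0"
      using c by (simp_all add: wsc2_def prj_def a0_def a1_def s0_def s1_def)
    have e3: "d 0 * a0 + d 1 * a1 = 0" and e4: "d 0 * s0 + d 1 * s1 = 1"
      using d by (simp_all add: wsc2_def prj_def a0_def a1_def s0_def s1_def)
    have "(a0 * s1 - a1 * s0) * (c 0 * d 1 - c 1 * d 0)
        = (c 0 * a0 + c 1 * a1) * (d 0 * s0 + d 1 * s1) - (d 0 * a0 + d 1 * a1) * (c 0 * s0 + c 1 * s1)"
      by (simp add: algebra_simps)
    also have "\<dots> = 1" using e1 e2 e3 e4 by simp
    finally have "(a0 * s1 - a1 * s0) * (c 0 * d 1 - c 1 * d 0) = 1" .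
    then show "dB l \<noteq> 0" unfolding dB_def a0_def a1_def s0_def s1_def by auto
  qed
  have eq: "\<forall>l<f. (of_nat p * \<delta> * \<delta>) * dB (Suc l mod f) = (A 0 0 l * A 1 1 l - A 0 1 l * A 1 0 l) * dB l"
  proof (intro allI impI)
    fix l assume l: "l < f"
    have R: "prj l (wphi p f \<delta> (bs j)) = wsc2 (A 0 j l) (prj l (bs 0)) + wsc2 (A 1 j l) (prj l (bs 1))"
      if "j < 2" for j
      using wmatrix_rel[OF M, of j] that r by (simp add: numeral_2_eq_2 prj_sum)
    have R': "(of_nat p * \<delta> * fst (bs j) (Suc l mod f), \<delta> * snd (bs j) (Suc l mod f))
        = wsc2 (A 0 j l) (prj l (bs 0)) + wsc2 (A 1 j l) (prj l (bs 1))"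
      if "j < 2" for j
      using R[OF that] prj_wphi[OF l, of p \<delta> "bs j"] by simp
    define a0 where "a0 = fst (bs 0) l"
    define a1 where "a1 = fst (bs 1) l"
    define s0 where "s0 = snd (bs 0) l"
    define s1 where "s1 = snd (bs 1) l"
    define P0 where "P0 = fst (bs 0) (Suc l mod f)"
    define P1 where "P1 = fst (bs 1) (Suc l mod f)"
    define Q0 where "Q0 = snd (bs 0) (Suc l mod f)"
    define Q1 where "Q1 = snd (bs 1) (Suc l mod f)"
    define q where "q = (of_nat p * \<delta> :: 'a)"
    have R0: "q * P0 = A 0 0 l * a0 + A 1 0 l * a1" "\<delta> * Q0 = A 0 0 l * s0 + A 1 0 l * s1"
      using R'[of 0] by (simp_all add: prj_wphi wsc2_def prj_def a0_def a1_def s0_def s1_def P0_def Q0_def q_def)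
    have R1: "q * P1 = A 0 1 l * a0 + A 1 1 l * a1" "\<delta> * Q1 = A 0 1 l * s0 + A 1 1 l * s1"
      using R'[of 1] by (simp_all add: prj_wphi wsc2_def prj_def a0_def a1_def s0_def s1_def P1_def Q1_def q_def)
    have "(q * \<delta>) * (P0 * Q1 - P1 * Q0) = (q * P0) * (\<delta> * Q1) - (q * P1) * (\<delta> * Q0)"
      by (simp add: algebra_simps)
    also have "\<dots> = (A 0 0 l * a0 + A 1 0 l * a1) * (A 0 1 l * s0 + A 1 1 l * s1)
                  - (A 0 1 l * a0 + A 1 1 l * a1) * (A 0 0 l * s0 + A 1 0 l * s1)"
      using R0 R1 by simp
    also have "\<dots> = (A 0 0 l * A 1 1 l - A 0 1 l * A 1 0 l) * (a0 * s1 - a1 * s0)"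
      by (simp add: algebra_simps)
    finally show "(of_nat p * \<delta> * \<delta>) * dB (Suc l mod f) = (A 0 0 l * A 1 1 l - A 0 1 l * A 1 0 l) * dB l"
      unfolding dB_def a0_def a1_def s0_def s1_def P0_def P1_def Q0_def Q1_def q_def .
  qed
  show ?thesis using r cancel_rot[OF f nz eq] by simp
qed

lemma inner_sum: assumes "\<forall>j. j \<noteq> a \<longrightarrow> t j = (0::int)"
  shows "(\<Sum>j\<in>{j. t j \<noteq> 0}. t j) = t a"
proof (cases "t a = 0")
  case True
  then have "{j. t j \<noteq> 0} = {}" using assms by auto
  then show ?thesis using True by simp
next
  case False
  then have "{j. t j \<noteq> 0} = {a}" using assms by auto
  then show ?thesis by simp
qed

lemma wtH_eq:
  assumes d: "\<And>s j. s < m \<Longrightarrow> int (wdimc s (M \<inter> wFil m k x y j)) = d s j"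
    and z: "\<And>s j. s < m \<Longrightarrow> j \<noteq> a s \<Longrightarrow> j * (d s j - d s (j+1)) = 0"
  shows "wtH m k x y M = (\<Sum>s<m. a s * (d s (a s) - d s (a s + 1)))"
  unfolding wtH_def Let_def
proof (rule sum.cong[OF refl])
  fix s assume s: "s \<in> {..<m}"
  have "(\<Sum>j\<in>{j. j * (int (wdimc s (M \<inter> wFil m k x y j)) - int (wdimc s (M \<inter> wFil m k x y (j + 1)))) \<noteq> 0}.
          j * (int (wdimc s (M \<inter> wFil m k x y j)) - int (wdimc s (M \<inter> wFil m k x y (j + 1)))))
      = (\<Sum>j\<in>{j. j * (d s j - d s (j+1)) \<noteq> 0}. j * (d s j - d s (j+1)))"
    using s d by simp
  also have "\<dots> = a s * (d s (a s) - d s (a s + 1))"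
    by (rule inner_sum) (use z s in auto)
  finally show "(\<Sum>j\<in>{j. j * (int (wdimc s (M \<inter> wFil m k x y j)) - int (wdimc s (M \<inter> wFil m k x y (j + 1)))) \<noteq> 0}.
          j * (int (wdimc s (M \<inter> wFil m k x y j)) - int (wdimc s (M \<inter> wFil m k x y (j + 1)))))
      = a s * (d s (a s) - d s (a s + 1))" .
qed

lemma prj_vecs: "s < m \<Longrightarrow> prj s ` (wvecs m \<times> wvecs m) = (UNIV :: ('a::field \<times> 'a) set)"
  using prj_D[of s m] by (simp add: wD_def)

lemma prj_D2m: "s < m \<Longrightarrow> prj s ` ({0} \<times> wvecs m) = range (\<lambda>t. wsc2 t (0::'a::field, 1))"
proof -
  assume s: "s < m"
  have "{0::nat\<Rightarrow>'a} \<times> wvecs m = {(0, b) | b. b \<in> (wvecs m :: (nat \<Rightarrow> 'a) set)}" by auto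
  then show ?thesis using prj_D2[OF s] by simp
qed

definition ind :: "nat \<Rightarrow> (nat \<Rightarrow> int) \<Rightarrow> int \<Rightarrow> nat \<Rightarrow> 'a::comm_ring_1" where
  "ind m k j = (\<lambda>i. if i < m \<and> k i \<ge> j then 1 else 0)"

lemma Fil_pos: "0 < j \<Longrightarrow> wFil m k x y j = {wsmult (c * ind m k j) (x, y) | c. c \<in> wvecs m}"
  by (simp add: wFil_def ind_def)

lemma Fil_nonpos: "j \<le> 0 \<Longrightarrow> wFil m k x y j = wvecs m \<times> wvecs m"
  by (simp add: wFil_def)

lemma Fil_sub: "wFil m k (x::nat\<Rightarrow>'a::field) y j \<subseteq> wvecs m \<times> wvecs m"
proof (cases "j \<le> 0")
  case True then show ?thesis by (simp add: Fil_nonpos)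
next
  case False then show ?thesis by (auto simp: Fil_pos wsmult_def wvecs_def)
qed

lemma prj_Fil_pos:
  assumes s: "s < m" and j: "0 < j"
  shows "prj s ` wFil m k x y j = range (\<lambda>t. wsc2 (t * ind m k j s) (x s, y s :: 'a::field))"
proof
  show "prj s ` wFil m k x y j \<subseteq> range (\<lambda>t. wsc2 (t * ind m k j s) (x s, y s))"
    using j by (auto simp: Fil_pos prj_def wsmult_def wsc2_def)
next
  show "range (\<lambda>t. wsc2 (t * ind m k j s) (x s, y s)) \<subseteq> prj s ` wFil m k x y j"
  proof
    fix w assume "w \<in> range (\<lambda>t. wsc2 (t * ind m k j s) (x s, y s))"
    then obtain t where w: "w = wsc2 (t * ind m k j s) (x s, y s)" by blast
    have "wsmult ((\<lambda>i. if i = s then t else 0) * ind m k j) (x, y) \<in> wFil m k x y j"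
      using j s by (auto simp: Fil_pos intro!: wvecs_single)
    moreover have "w = prj s (wsmult ((\<lambda>i. if i = s then t else 0) * ind m k j) (x, y))"
      using w by (simp add: prj_def wsmult_def wsc2_def)
    ultimately show "w \<in> prj s ` wFil m k x y j" by (rule image_eqI[rotated])
  qed
qed

lemma ind_s: "s < m \<Longrightarrow> ind m k j s = (if j \<le> k s then 1 else 0)"
  by (simp add: ind_def)

lemma dim_full:
  assumes s: "s < m" and xy: "(x s, y s) \<noteq> (0::'a::field, 0)"
  shows "int (wdimc s ((wvecs m \<times> wvecs m) \<inter> wFil m k x y j)) = (if j \<le> 0 then 2 else if j \<le> k s then 1 else 0)"
proof -
  have I: "(wvecs m \<times> wvecs m) \<inter> wFil m k x y j = wFil m k x y j" using Fil_sub by blast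
  have E: "wdimc s ((wvecs m \<times> wvecs m) \<inter> wFil m k x y j) = W.dim (prj s ` wFil m k x y j)"
    by (subst I) (rule wdimc_prj)
  show ?thesis
  proof (cases "j \<le> 0")
    case True
    have "prj s ` wFil m k x y j = (UNIV :: ('a\<times>'a) set)" unfolding Fil_nonpos[OF True] by (rule prj_vecs[OF s])
    then show ?thesis unfolding E using True by simp
  next
    case False
    then have j: "0 < j" by simp
    show ?thesis
    proof (cases "j \<le> k s")
      case True
      then show ?thesis unfolding E prj_Fil_pos[OF s j] ind_s[OF s]
        using W_dim_line[of "(x s, y s)"] xy False by (simp add: zero_prod_def)
    next
      case F2: False
      have "range (\<lambda>t. wsc2 (t * 0) (x s, y s)) = {0::'a\<times>'a}" by auto
      then show ?thesis unfolding E prj_Fil_pos[OF s j] ind_s[OF s]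
        using False F2 by simp
    qed
  qed
qed

lemma prj_D2_Fil:
  assumes s: "s < m" and j: "0 < j"
  shows "prj s ` (({0} \<times> wvecs m) \<inter> wFil m k x y j)
       = (if j \<le> k s \<and> x s = 0 then range (\<lambda>t. wsc2 t (0, y s)) else {0::'a::field\<times>'a})"
proof -
  let ?M = "({0} \<times> wvecs m) \<inter> wFil m k x y j"
  have mem: "u \<in> ?M \<longleftrightarrow> (\<exists>c. c \<in> wvecs m \<and> u = wsmult (c * ind m k j) (x, y) \<and> c * ind m k j * x = 0)" for u
    unfolding Fil_pos[OF j] by (auto simp: wsmult_def wvecs_def)
  show ?thesis
  proof (cases "j \<le> k s \<and> x s = 0")
    case True
    have "prj s ` ?M = range (\<lambda>t. wsc2 t (0, y s))"
    proof
      show "prj s ` ?M \<subseteq> range (\<lambda>t. wsc2 t (0, y s))"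
      proof
        fix w assume "w \<in> prj s ` ?M"
        then obtain u where u: "w = prj s u" "u \<in> ?M" by (rule imageE)
        then obtain c where c: "u = wsmult (c * ind m k j) (x, y)" using mem by blast
        have "w = wsc2 (c s) (0, y s)" using u(1) c True s by (simp add: prj_def wsmult_def wsc2_def ind_s)
        then show "w \<in> range (\<lambda>t. wsc2 t (0, y s))" by blast
      qed
    next
      show "range (\<lambda>t. wsc2 t (0, y s)) \<subseteq> prj s ` ?M"
      proof
        fix w assume "w \<in> range (\<lambda>t. wsc2 t (0, y s))"
        then obtain t where w: "w = wsc2 t (0, y s)" by blast
        define c where "c = (\<lambda>i. if i = s then t else (0::'a))"
        have cv: "c \<in> wvecs m" using s by (simp add: c_def wvecs_single)
        have "c * ind m k j * x = 0" using True by (auto simp: c_def fun_eq_iff)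
        then have "wsmult (c * ind m k j) (x, y) \<in> ?M" using mem cv by blast
        moreover have "w = prj s (wsmult (c * ind m k j) (x, y))"
          using w True s by (simp add: prj_def wsmult_def wsc2_def c_def ind_s)
        ultimately show "w \<in> prj s ` ?M" by (rule image_eqI[rotated])
      qed
    qed
    then show ?thesis using True by simp
  next
    case False
    have "prj s ` ?M = {0}"
    proof
      show "prj s ` ?M \<subseteq> {0}"
      proof
        fix w assume "w \<in> prj s ` ?M"
        then obtain u where u: "w = prj s u" "u \<in> ?M" by (rule imageE)
        then obtain c where c: "u = wsmult (c * ind m k j) (x, y)" "c * ind m k j * x = 0" using mem by blast
        from c(2) have cx: "c s * ind m k j s * x s = 0" by (metis times_fun_apply zero_fun_apply)
        have "c s * ind m k j s = 0"
        proof (cases "j \<le> k s")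
          case True then have "x s \<noteq> 0" using False by simp
          then show ?thesis using cx by simp
        next
          case F: False then show ?thesis using s by (simp add: ind_s)
        qed
        then show "w \<in> {0}" using u(1) c(1) by (simp add: prj_def wsmult_def zero_prod_def)
      qed
    next
      have "(0::(nat\<Rightarrow>'a)\<times>(nat\<Rightarrow>'a)) \<in> ?M"
        unfolding mem by (rule exI[of _ 0]) (auto simp: wsmult_def zero_prod_def wvecs_def)
      then have "prj s 0 \<in> prj s ` ?M" by (rule imageI)
      then show "{0} \<subseteq> prj s ` ?M" by simp
    qed
    then show ?thesis unfolding if_not_P[OF False] .
  qed
qed

lemma dim_D2:
  assumes s: "s < m" and xy: "(x s, y s) \<noteq> (0::'a::field, 0)"
  shows "int (wdimc s (({0} \<times> wvecs m) \<inter> wFil m k x y j)) = (if j \<le> 0 then 1 else if j \<le> k s \<and> x s = 0 then 1 else 0)"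
proof (cases "j \<le> 0")
  case True
  have I: "({0} \<times> wvecs m) \<inter> wFil m k x y j = {0::nat\<Rightarrow>'a} \<times> wvecs m"
    unfolding Fil_nonpos[OF True] by (auto simp: wvecs_def)
  have "wdimc s (({0} \<times> wvecs m) \<inter> wFil m k x y j) = W.dim (prj s ` ({0::nat\<Rightarrow>'a} \<times> wvecs m))"
    by (subst I) (rule wdimc_prj)
  also have "\<dots> = 1" unfolding prj_D2m[OF s] by (rule W_dim_line) (simp add: zero_prod_def)
  finally show ?thesis using True by simp
next
  case False
  then have j: "0 < j" by simp
  have E: "wdimc s (({0} \<times> wvecs m) \<inter> wFil m k x y j) = W.dim (prj s ` (({0} \<times> wvecs m) \<inter> wFil m k x y j))"
    by (rule wdimc_prj)
  show ?thesis
  proof (cases "j \<le> k s \<and> x s = 0")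
    case True
    then have "y s \<noteq> 0" using xy by auto
    then have "W.dim (range (\<lambda>t. wsc2 t (0, y s))) = 1" by (intro W_dim_line) (simp add: zero_prod_def)
    then show ?thesis unfolding E prj_D2_Fil[OF s j] using True False by simp
  next
    case F2: False
    then show ?thesis unfolding E prj_D2_Fil[OF s j] if_not_P[OF F2] using False by simp
  qed
qed

lemma tH_full_val:
  assumes xy: "\<And>s. s < m \<Longrightarrow> (x s, y s) \<noteq> (0::'a::field, 0)" and kn: "\<And>s. s < m \<Longrightarrow> k s \<ge> 0"
  shows "wtH m k x y (wvecs m \<times> wvecs m) = (\<Sum>s<m. k s)"
proof -
  have "wtH m k x y (wvecs m \<times> wvecs m) = (\<Sum>s<m. k s * ((\<lambda>j. if j \<le> 0 then 2 else if j \<le> k s then 1 else 0) (k s)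
        - (\<lambda>j. if j \<le> 0 then 2 else if j \<le> k s then 1 else 0) (k s + 1)))"
  proof (rule wtH_eq[where d="\<lambda>s j. if j \<le> 0 then 2 else if j \<le> k s then 1 else 0" and a=k])
    fix s j assume s: "s < m"
    show "int (wdimc s ((wvecs m \<times> wvecs m) \<inter> wFil m k x y j)) = (if j \<le> 0 then 2 else if j \<le> k s then 1 else 0)"
      by (rule dim_full[OF s]) (rule xy[OF s])
  qed auto
  also have "\<dots> = (\<Sum>s<m. k s)"
  proof (rule sum.cong[OF refl])
    fix s assume "s \<in> {..<m}"
    then have "k s \<ge> 0" using kn by auto
    then show "k s * ((\<lambda>j. if j \<le> 0 then 2 else if j \<le> k s then 1 else 0) (k s)
        - (\<lambda>j. if j \<le> 0 then 2 else if j \<le> k s then 1 else 0) (k s + 1)) = k s"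
      by (cases "k s = 0") auto
  qed
  finally show ?thesis .
qed

lemma tH_D2_val:
  assumes xy: "\<And>s. s < m \<Longrightarrow> (x s, y s) \<noteq> (0::'a::field, 0)" and kn: "\<And>s. s < m \<Longrightarrow> k s \<ge> 0"
  shows "wtH m k x y ({0} \<times> wvecs m) = (\<Sum>s<m. if x s = 0 then k s else 0)"
proof -
  have "wtH m k x y ({0} \<times> wvecs m) = (\<Sum>s<m. k s * ((\<lambda>j. if j \<le> 0 then 1 else if j \<le> k s \<and> x s = 0 then 1 else 0) (k s)
        - (\<lambda>j. if j \<le> 0 then 1 else if j \<le> k s \<and> x s = 0 then 1 else 0) (k s + 1)))"
  proof (rule wtH_eq[where d="\<lambda>s j. if j \<le> 0 then 1 else if j \<le> k s \<and> x s = 0 then 1 else 0" and a=k])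
    fix s j assume s: "s < m"
    show "int (wdimc s (({0} \<times> wvecs m) \<inter> wFil m k x y j)) = (if j \<le> 0 then 1 else if j \<le> k s \<and> x s = 0 then 1 else 0)"
      by (rule dim_D2[OF s]) (rule xy[OF s])
  qed auto
  also have "\<dots> = (\<Sum>s<m. if x s = 0 then k s else 0)"
  proof (rule sum.cong[OF refl])
    fix s assume "s \<in> {..<m}"
    then have "k s \<ge> 0" using kn by auto
    then show "k s * ((\<lambda>j. if j \<le> 0 then 1 else if j \<le> k s \<and> x s = 0 then 1 else 0) (k s)
        - (\<lambda>j. if j \<le> 0 then 1 else if j \<le> k s \<and> x s = 0 then 1 else 0) (k s + 1)) = (if x s = 0 then k s else 0)"
      by (cases "k s = 0") auto
  qed
  finally show ?thesis .
qed

lemma tH_zero_val: "wtH m k (x::nat\<Rightarrow>'a::field) y {0} = 0"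
proof -
  have "wtH m k x y {0} = (\<Sum>s<m. 0 * ((\<lambda>j. 0::int) 0 - (\<lambda>j. 0::int) (0 + 1)))"
  proof (rule wtH_eq[where d="\<lambda>s j. 0" and a="\<lambda>s. 0"])
    fix s j
    have "prj s ` ({0} \<inter> wFil m k x y j) \<subseteq> {0}" by auto
    then show "int (wdimc s ({0} \<inter> wFil m k x y j)) = 0" by (simp add: wdimc_prj)
  qed simp
  then show ?thesis by simp
qed

lemma wL_intro: "(\<forall>j<(n::nat). c j \<in> wvecs m \<and> w j \<in> S) \<Longrightarrow> u = (\<Sum>j<n. wsmult (c j) (wtens f m (fst (w j)), wtens f m (snd (w j)))) \<Longrightarrow> u \<in> wL f m S"
  unfolding wL_def by blast

lemma wL_elim: "u \<in> wL f m S \<Longrightarrow> \<exists>(n::nat) c w. (\<forall>j<n. c j \<in> wvecs m \<and> w j \<in> S) \<and> u = (\<Sum>j<n. wsmult (c j) (wtens f m (fst (w j)), wtens f m (snd (w j))))"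
  unfolding wL_def by blast

lemma prj_vanish: "(\<forall>i\<ge>m. prj i u = 0) \<Longrightarrow> u \<in> wvecs m \<times> wvecs (m::nat)"
  by (cases u) (auto simp: prj_def wvecs_def zero_prod_def)

lemma wtens_cst: "0 < f \<Longrightarrow> wtens f m (wcst f (1::'a::zero_neq_one)) = wcst m 1"
  by (auto simp: wtens_def wcst_def fun_eq_iff)
lemma wtens_0: "wtens f m 0 = 0"
  by (auto simp: wtens_def fun_eq_iff)

lemma mult_wcst1: "b \<in> wvecs n \<Longrightarrow> b * wcst n (1::'a::comm_ring_1) = b"
  by (auto simp: wvecs_def wcst_def fun_eq_iff)

lemma wL_D:
  assumes f: "0 < f"
  shows "wL f m (wD f) = wvecs m \<times> (wvecs m :: (nat \<Rightarrow> 'a::field) set)"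
proof
  show "wL f m (wD f) \<subseteq> wvecs m \<times> (wvecs m :: (nat \<Rightarrow> 'a::field) set)"
  proof
    fix u :: "(nat \<Rightarrow> 'a) \<times> (nat \<Rightarrow> 'a)" assume "u \<in> wL f m (wD f)"
    then obtain n :: nat and c w where cw: "\<forall>j<n. c j \<in> wvecs m \<and> w j \<in> wD f"
      and u: "u = (\<Sum>j<n. wsmult (c j) (wtens f m (fst (w j)), wtens f m (snd (w j))))"
      using wL_elim by blast
    show "u \<in> wvecs m \<times> wvecs m"
    proof (rule prj_vanish, intro allI impI)
      fix i assume i: "m \<le> i"
      have "\<forall>j<n. c j i = 0" using cw i by (auto simp: wvecs_def)
      then show "prj i u = 0" unfolding u prj_sum by (simp add: prj_sum)
    qed
  qed
next
  show "wvecs m \<times> wvecs m \<subseteq> wL f m (wD f :: ((nat \<Rightarrow> 'a::field) \<times> (nat \<Rightarrow> 'a)) set)"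
  proof
    fix u :: "(nat \<Rightarrow> 'a) \<times> (nat \<Rightarrow> 'a)" assume u: "u \<in> wvecs m \<times> wvecs m"
    define c where "c = (\<lambda>j::nat. if j = 0 then fst u else snd u)"
    define w where "w = (\<lambda>j::nat. if j = 0 then (wcst f (1::'a), 0::nat\<Rightarrow>'a) else (0, wcst f 1))"
    show "u \<in> wL f m (wD f)"
    proof (rule wL_intro[of 2 c m w])
      show "\<forall>j<2. c j \<in> wvecs m \<and> w j \<in> wD f" using u by (auto simp: c_def w_def wD_def wcst_def wvecs_def)
      show "u = (\<Sum>j<2. wsmult (c j) (wtens f m (fst (w j)), wtens f m (snd (w j))))"
        using u f by (cases u) (simp add: numeral_2_eq_2 c_def w_def wtens_cst wtens_0 wsmult_def mult_wcst1)
    qed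
  qed
qed

lemma wL_D2:
  assumes f: "0 < f"
  shows "wL f m {(0::nat\<Rightarrow>'a, b::nat\<Rightarrow>'a) | b. b \<in> wvecs f} = {0} \<times> (wvecs m :: (nat \<Rightarrow> 'a::field) set)"
proof
  show "wL f m {(0::nat\<Rightarrow>'a, b::nat\<Rightarrow>'a) | b. b \<in> wvecs f} \<subseteq> {0} \<times> (wvecs m :: (nat \<Rightarrow> 'a::field) set)"
  proof
    fix u :: "(nat \<Rightarrow> 'a) \<times> (nat \<Rightarrow> 'a)" assume "u \<in> wL f m {(0::nat\<Rightarrow>'a, b::nat\<Rightarrow>'a) | b. b \<in> wvecs f}"
    then obtain n :: nat and c w where cw: "\<forall>j<n. c j \<in> wvecs m \<and> w j \<in> {(0::nat\<Rightarrow>'a, b::nat\<Rightarrow>'a) | b. b \<in> wvecs f}"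
      and u: "u = (\<Sum>j<n. wsmult (c j) (wtens f m (fst (w j)), wtens f m (snd (w j))))"
      using wL_elim by blast
    have "u \<in> wvecs m \<times> wvecs m"
    proof (rule prj_vanish, intro allI impI)
      fix i assume i: "m \<le> i"
      have "\<forall>j<n. c j i = 0" using cw i by (auto simp: wvecs_def)
      then show "prj i u = 0" unfolding u prj_sum by (simp add: prj_sum)
    qed
    moreover have "fst u = 0"
    proof -
      have "\<forall>j<n. fst (w j) = 0" using cw by auto
      then show ?thesis unfolding u by (simp add: fst_sum wsmult_def wtens_0)
    qed
    ultimately show "u \<in> {0} \<times> wvecs m" by (cases u) auto
  qed
next
  show "{0} \<times> wvecs m \<subseteq> wL f m {(0::nat\<Rightarrow>'a::field, b::nat\<Rightarrow>'a) | b. b \<in> wvecs f}"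
  proof
    fix u :: "(nat \<Rightarrow> 'a) \<times> (nat \<Rightarrow> 'a)" assume u: "u \<in> {0} \<times> wvecs m"
    define c where "c = (\<lambda>j::nat. snd u)"
    define w where "w = (\<lambda>j::nat. (0::nat\<Rightarrow>'a, wcst f (1::'a)))"
    show "u \<in> wL f m {(0::nat\<Rightarrow>'a, b::nat\<Rightarrow>'a) | b. b \<in> wvecs f}"
    proof (rule wL_intro[of 1 c m w])
      show "\<forall>j<1. c j \<in> wvecs m \<and> w j \<in> {(0::nat\<Rightarrow>'a, b::nat\<Rightarrow>'a) | b. b \<in> wvecs f}" using u by (auto simp: c_def w_def wcst_vec)
      show "u = (\<Sum>j<1. wsmult (c j) (wtens f m (fst (w j)), wtens f m (snd (w j))))"
        using u f by (cases u) (auto simp: c_def w_def wtens_cst wtens_0 wsmult_def mult_wcst1)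
    qed
  qed
qed

lemma wL_0: "wL f m {0} = {0 :: (nat \<Rightarrow> 'a::field) \<times> (nat \<Rightarrow> 'a)}"
proof
  show "wL f m {0} \<subseteq> {0 :: (nat \<Rightarrow> 'a::field) \<times> (nat \<Rightarrow> 'a)}"
  proof
    fix u :: "(nat \<Rightarrow> 'a) \<times> (nat \<Rightarrow> 'a)" assume "u \<in> wL f m {0}"
    then obtain n :: nat and c w where cw: "\<forall>j<n. c j \<in> wvecs m \<and> w j \<in> {0}"
      and u: "u = (\<Sum>j<n. wsmult (c j) (wtens f m (fst (w j)), wtens f m (snd (w j))))"
      using wL_elim by blast
    have "\<forall>j<n. w j = 0" using cw by auto
    then have "u = (\<Sum>j<n. 0)" unfolding u by (intro sum.cong) (auto simp: wtens_0 wsmult_def zero_prod_def)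
    then show "u \<in> {0}" by simp
  qed
next
  show "{0} \<subseteq> wL f m {0 :: (nat \<Rightarrow> 'a::field) \<times> (nat \<Rightarrow> 'a)}"
    using wL_intro[of 0 _ m _ "{0}" 0 f] by simp
qed

definition evec :: "nat \<Rightarrow> nat \<Rightarrow> 'a::zero_neq_one" where
  "evec l = (\<lambda>i. if i = l then 1 else 0)"

lemma evec_vec: "l < f \<Longrightarrow> evec l \<in> wvecs f" by (simp add: evec_def wvecs_def)

lemma shift_evec:
  assumes l: "l < f"
  shows "wshift f 1 (evec l) = evec ((l + f - 1) mod f)"
proof (rule ext)
  fix t
  show "wshift f 1 (evec l) t = evec ((l + f - 1) mod f) t"
  proof (cases "t < f")
    case False
    have "(l + f - 1) mod f < f" using l by simp
    then show ?thesis using False by (auto simp: wshift_def evec_def)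
  next
    case True
    have m: "(t + 1) mod f = (if t + 1 = f then 0 else t + 1)"
      using True by (auto simp: Suc_lessI)
    have "((t + 1) mod f = l) \<longleftrightarrow> (t = (l + f - 1) mod f)"
    proof (cases l)
      case 0
      have "(0 + f - 1) mod f = f - 1" using True by simp
      then show ?thesis using 0 True m by auto
    next
      case (Suc c)
      have "(l + f - 1) mod f = c" using l Suc by (simp add: mod_add_right_eq[symmetric])
      then show ?thesis using Suc m l by auto
    qed
    then show ?thesis using True by (auto simp: wshift_def evec_def)
  qed
qed

lemma wshift_zero: "wshift f s (0::nat\<Rightarrow>'a::zero) = 0" by (simp add: wshift_def fun_eq_iff)

lemma all_from_step:
  assumes f: "0 < (f::nat)" and l: "l < f" and Ql: "Q l"
    and step: "\<And>i. i < f \<Longrightarrow> Q i \<Longrightarrow> Q ((i + f - 1) mod f)"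
  shows "\<forall>i<f. Q i"
proof -
  have down: "n < f \<Longrightarrow> Q n \<Longrightarrow> \<forall>i\<le>n. Q i" for n
  proof (induction n)
    case 0 then show ?case by simp
  next
    case (Suc n)
    have "(Suc n + f - 1) mod f = n" using Suc.prems(1) by simp
    then have "Q n" using step[OF Suc.prems(1,2)] by simp
    then have "\<forall>i\<le>n. Q i" using Suc by simp
    then show ?case using Suc.prems(2) le_Suc_eq by blast
  qed
  have "Q 0" using down[OF l Ql] by simp
  then have "Q (f - 1)" using step[of 0] f by simp
  then have "\<forall>i\<le>f-1. Q i" using down[of "f-1"] f by simp
  then show ?thesis by auto
qed

lemma sub_add: "wsubmod f S \<Longrightarrow> u \<in> S \<Longrightarrow> w \<in> S \<Longrightarrow> u + w \<in> S"
  unfolding wsubmod_def by blast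
lemma sub_smult: "wsubmod f S \<Longrightarrow> a \<in> wvecs f \<Longrightarrow> u \<in> S \<Longrightarrow> wsmult a u \<in> S"
  unfolding wsubmod_def by blast
lemma sub_zero: "wsubmod f S \<Longrightarrow> 0 \<in> S"
  unfolding wsubmod_def by blast
lemma sub_sub: "wsubmod f S \<Longrightarrow> S \<subseteq> wD f"
  unfolding wsubmod_def by blast
lemma sub_sum: assumes "wsubmod f S" "finite A" "\<forall>i\<in>A. g i \<in> S" shows "sum g A \<in> S"
  using assms(2,3)
proof (induction A rule: finite_induct)
  case empty then show ?case using sub_zero[OF assms(1)] by simp
next
  case (insert a A) then show ?case using sub_add[OF assms(1)] by simp
qed

lemma wcst_evec: "l < f \<Longrightarrow> wcst f c * evec l = (\<lambda>i. if i = l then c else (0::'a::field))"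
  by (auto simp: wcst_def evec_def fun_eq_iff)

lemma scale_evec: "l < f \<Longrightarrow> c \<noteq> 0 \<Longrightarrow> wcst f (inverse c) * (\<lambda>i. if i = l then c else (0::'a::field)) = evec l"
  by (auto simp: wcst_def evec_def fun_eq_iff)

lemma snd_chain:
  fixes S :: "((nat \<Rightarrow> 'a::field) \<times> (nat \<Rightarrow> 'a)) set"
  assumes f: "0 < f" and d: "\<delta> \<noteq> 0" and sub: "wsubmod f S" and ph: "wphi p f \<delta> ` S \<subseteq> S"
    and l: "l < f" and in0: "(0, evec l) \<in> S"
  shows "\<forall>i<f. (0, evec i) \<in> S"
proof (rule all_from_step[where Q="\<lambda>i. (0, evec i) \<in> S", OF f l in0])
  fix i assume i: "i < f" and Q: "(0, evec i) \<in> S"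
  have i': "(i + f - 1) mod f < f" using f by simp
  have "wphi p f \<delta> (0, evec i) \<in> S" using ph Q by blast
  moreover have "wphi p f \<delta> (0, evec i) = (0, (\<lambda>t. if t = (i + f - 1) mod f then \<delta> else 0))"
    unfolding wphi_def fst_conv snd_conv shift_evec[OF i] using i' by (simp add: wcst_evec wshift_zero)
  ultimately have "wsmult (wcst f (inverse \<delta>)) (0, (\<lambda>t. if t = (i + f - 1) mod f then \<delta> else 0)) \<in> S"
    using sub_smult[OF sub wcst_vec] by simp
  then show "(0, evec ((i + f - 1) mod f)) \<in> S"
    using scale_evec[OF i' d] by (simp add: wsmult_def)
qed

lemma fst_chain:
  fixes S :: "((nat \<Rightarrow> 'a::field) \<times> (nat \<Rightarrow> 'a)) set"
  assumes f: "0 < f" and d: "of_nat p * \<delta> \<noteq> 0" and sub: "wsubmod f S" and ph: "wphi p f \<delta> ` S \<subseteq> S"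
    and l: "l < f" and in0: "(evec l, 0) \<in> S"
  shows "\<forall>i<f. (evec i, 0) \<in> S"
proof (rule all_from_step[where Q="\<lambda>i. (evec i, 0) \<in> S", OF f l in0])
  fix i assume i: "i < f" and Q: "(evec i, 0) \<in> S"
  have i': "(i + f - 1) mod f < f" using f by simp
  have "wphi p f \<delta> (evec i, 0) \<in> S" using ph Q by blast
  moreover have "wphi p f \<delta> (evec i, 0) = ((\<lambda>t. if t = (i + f - 1) mod f then of_nat p * \<delta> else 0), 0)"
    unfolding wphi_def fst_conv snd_conv shift_evec[OF i] using i' by (simp add: wcst_evec wshift_zero)
  ultimately have "wsmult (wcst f (inverse (of_nat p * \<delta>))) ((\<lambda>t. if t = (i + f - 1) mod f then of_nat p * \<delta> else 0), 0) \<in> S"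
    using sub_smult[OF sub wcst_vec] by simp
  then show "(evec ((i + f - 1) mod f), 0) \<in> S"
    using scale_evec[OF i' d] by (simp add: wsmult_def)
qed

lemma sum_evec: "(\<Sum>i<f. evec i) = wcst f (1::'a::comm_ring_1)"
  by (rule ext) (simp add: fun_sum_apply evec_def wcst_def)

lemma snd_all:
  fixes S :: "((nat \<Rightarrow> 'a::field) \<times> (nat \<Rightarrow> 'a)) set"
  assumes sub: "wsubmod f S" and all: "\<forall>i<f. (0, evec i) \<in> S" and b: "b \<in> wvecs f"
  shows "(0, b) \<in> S"
proof -
  have "(\<Sum>i<f. wsmult b (0, evec i)) \<in> S"
    by (rule sub_sum[OF sub]) (use all sub_smult[OF sub b] in auto)
  moreover have "(\<Sum>i<f. wsmult b (0, evec i)) = (0, b)"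
  proof -
    have "(\<Sum>i<f. wsmult b (0, evec i)) = (\<Sum>i<f. (0, b * evec i))" by (simp add: wsmult_def)
    also have "\<dots> = (0, b * (\<Sum>i<f. evec i))" by (simp add: sum_prod sum_distrib_left)
    also have "\<dots> = (0, b)" by (simp add: sum_evec mult_wcst1[OF b])
    finally show ?thesis .
  qed
  ultimately show ?thesis by simp
qed

lemma fst_all:
  fixes S :: "((nat \<Rightarrow> 'a::field) \<times> (nat \<Rightarrow> 'a)) set"
  assumes sub: "wsubmod f S" and all: "\<forall>i<f. (evec i, 0) \<in> S" and b: "b \<in> wvecs f"
  shows "(b, 0) \<in> S"
proof -
  have "(\<Sum>i<f. wsmult b (evec i, 0)) \<in> S"
    by (rule sub_sum[OF sub]) (use all sub_smult[OF sub b] in auto)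
  moreover have "(\<Sum>i<f. wsmult b (evec i, 0)) = (b, 0)"
  proof -
    have "(\<Sum>i<f. wsmult b (evec i, 0)) = (\<Sum>i<f. (b * evec i, 0))" by (simp add: wsmult_def)
    also have "\<dots> = (b * (\<Sum>i<f. evec i), 0)" by (simp add: sum_prod sum_distrib_left)
    also have "\<dots> = (b, 0)" by (simp add: sum_evec mult_wcst1[OF b])
    finally show ?thesis .
  qed
  ultimately show ?thesis by simp
qed

lemma pick_evec:
  fixes a :: "nat \<Rightarrow> 'a::field"
  assumes "a l \<noteq> 0"
  shows "(\<lambda>i. if i = l then inverse (a l) else 0) * a = evec l"
  using assms by (auto simp: evec_def fun_eq_iff)

lemma classify:
  fixes S :: "((nat \<Rightarrow> 'a::field) \<times> (nat \<Rightarrow> 'a)) set"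
  assumes f: "0 < f" and d: "\<delta> \<noteq> 0" and pd: "of_nat p * \<delta> \<noteq> 0"
    and sub: "wsubmod f S" and ph: "wphi p f \<delta> ` S \<subseteq> S" and nn: "wN ` S \<subseteq> S"
  shows "S = {0} \<or> S = {(0::nat\<Rightarrow>'a, b::nat\<Rightarrow>'a) | b. b \<in> wvecs f} \<or> S = wD f"
proof -
  let ?D2 = "{(0::nat\<Rightarrow>'a, b::nat\<Rightarrow>'a) | b. b \<in> wvecs f}"
  have D2sub: "?D2 \<subseteq> S" if l: "l < f" and inS: "(0, evec l) \<in> S" for l
  proof
    fix u assume "u \<in> ?D2"
    then obtain b where "u = (0, b)" "b \<in> wvecs f" by blast
    then show "u \<in> S" using snd_all[OF sub snd_chain[OF f d sub ph l inS]] by simp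
  qed
  have getl: "\<exists>l<f. a l \<noteq> 0" if av: "a \<in> wvecs f" and an: "a \<noteq> 0" for a :: "nat \<Rightarrow> 'a"
  proof -
    obtain l where "a l \<noteq> 0" using an by (auto simp: fun_eq_iff)
    moreover have "l < f" using av \<open>a l \<noteq> 0\<close> by (auto simp: wvecs_def) (metis not_less)
    ultimately show ?thesis by blast
  qed
  show ?thesis
  proof (cases "\<exists>u\<in>S. fst u \<noteq> 0")
    case True
    then obtain a b where ab: "(a, b) \<in> S" "a \<noteq> 0" by auto
    have abD: "(a, b) \<in> wD f" using ab(1) sub_sub[OF sub] by blast
    then have av: "a \<in> wvecs f" and bv: "b \<in> wvecs f" by (auto simp: wD_def)
    obtain l where l: "l < f" "a l \<noteq> 0" using getl[OF av ab(2)] by blast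
    let ?c = "\<lambda>i. if i = l then inverse (a l) else (0::'a)"
    have cv: "?c \<in> wvecs f" using l(1) by (rule wvecs_single)
    have "(0, a) \<in> S" using nn ab(1) by (force simp: wN_def)
    then have "wsmult ?c (0, a) \<in> S" by (rule sub_smult[OF sub cv])
    then have "(0, evec l) \<in> S" using pick_evec[of a l, OF l(2)] by (simp add: wsmult_def)
    then have D2S: "?D2 \<subseteq> S" using D2sub l(1) by blast
    have "- b \<in> wvecs f" using bv by (auto simp: wvecs_def)
    then have "(0, - b) \<in> S" using D2S by blast
    then have "(a, b) + (0, - b) \<in> S" by (rule sub_add[OF sub ab(1)])
    then have "(a, 0) \<in> S" by simp
    then have "wsmult ?c (a, 0) \<in> S" by (rule sub_smult[OF sub cv])
    then have "(evec l, 0) \<in> S" using pick_evec[of a l, OF l(2)] by (simp add: wsmult_def)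
    from fst_chain[OF f pd sub ph l(1) this] have allf: "\<forall>i<f. (evec i, 0) \<in> S" .
    have "wD f \<subseteq> S"
    proof
      fix u :: "(nat \<Rightarrow> 'a) \<times> (nat \<Rightarrow> 'a)" assume "u \<in> wD f"
      then obtain a' b' :: "nat \<Rightarrow> 'a" where u: "u = (a', b')" "a' \<in> wvecs f" "b' \<in> wvecs f" by (auto simp: wD_def)
      have "(a', 0::nat\<Rightarrow>'a) + (0, b') \<in> S"
        using sub_add[OF sub fst_all[OF sub allf u(2)]] D2S u(3) by blast
      then show "u \<in> S" using u(1) by simp
    qed
    then show ?thesis using sub_sub[OF sub] by blast
  next
    case False
    then have fst0: "\<forall>u\<in>S. fst u = 0" by auto
    show ?thesis
    proof (cases "S \<subseteq> {0}")
      case True then show ?thesis using sub_zero[OF sub] by blast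
    next
      case F2: False
      then obtain u where u: "u \<in> S" "u \<noteq> 0" by blast
      obtain b where ub: "u = (0, b)" using fst0 u(1) by (cases u) auto
      have bv: "b \<in> wvecs f" using u(1) ub sub_sub[OF sub] by (auto simp: wD_def)
      have "b \<noteq> 0" using u(2) ub by (simp add: zero_prod_def)
      obtain l where l: "l < f" "b l \<noteq> 0" using getl[OF bv \<open>b \<noteq> 0\<close>] by blast
      let ?c = "\<lambda>i. if i = l then inverse (b l) else (0::'a)"
      have cv: "?c \<in> wvecs f" using l(1) by (rule wvecs_single)
      have "wsmult ?c (0, b) \<in> S" using u(1) ub sub_smult[OF sub cv] by simp
      then have "(0, evec l) \<in> S" using pick_evec[of b l, OF l(2)] by (simp add: wsmult_def)
      then have "?D2 \<subseteq> S" using D2sub l(1) by blast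
      moreover have "S \<subseteq> ?D2"
      proof
        fix w assume w: "w \<in> S"
        then have "fst w = 0" using fst0 by blast
        moreover have "snd w \<in> wvecs f" using w sub_sub[OF sub] by (auto simp: wD_def)
        ultimately show "w \<in> ?D2" by (cases w) auto
      qed
      ultimately show ?thesis by blast
    qed
  qed
qed

lemma v_one: assumes vm: "\<And>a b. a \<noteq> 0 \<Longrightarrow> b \<noteq> 0 \<Longrightarrow> v (a * b) = v a + v b"
  shows "v (1::'a::field) = (0::rat)"
  using vm[of 1 1] by simp

lemma v_pow: assumes vm: "\<And>a b. a \<noteq> 0 \<Longrightarrow> b \<noteq> 0 \<Longrightarrow> v (a * b) = v a + v b"
  and a: "(a::'a::field) \<noteq> 0"
  shows "v (a ^ n) = of_nat n * (v a :: rat)"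
proof (induction n)
  case 0 then show ?case using v_one[of v, OF vm] by simp
next
  case (Suc n)
  have "v (a ^ Suc n) = v (a * a ^ n)" by simp
  also have "\<dots> = v a + v (a ^ n)" using vm a by simp
  finally show ?case using Suc by (simp add: algebra_simps)
qed

definition bsD :: "nat \<Rightarrow> nat \<Rightarrow> (nat \<Rightarrow> 'a::comm_ring_1) \<times> (nat \<Rightarrow> 'a)" where
  "bsD f = (\<lambda>j. if j = 0 then (wcst f 1, 0) else (0, wcst f 1))"

lemma wshift_wcst: "wshift f s (wcst f c) = wcst f c"
  by (auto simp: wshift_def wcst_def fun_eq_iff)

lemma wcst_mult: "wcst f a * wcst f b = wcst f (a * (b::'a::comm_ring_1))"
  by (auto simp: wcst_def fun_eq_iff)

lemma basis_D: assumes f: "0 < f" shows "wbasis f (wD f) 2 (bsD f :: nat \<Rightarrow> (nat \<Rightarrow> 'a::field) \<times> _)"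
  unfolding wbasis_def
proof (intro conjI)
  show "\<forall>j<2. bsD f j \<in> wD f" by (auto simp: bsD_def wD_def wcst_def wvecs_def)
  show "wD f = {\<Sum>j<2. wsmult (c j) (bsD f j) | c. \<forall>j<2. c j \<in> wvecs f}"
    apply (rule Set.set_eqI, rule iffI)
    subgoal for u
      apply (rule CollectI, rule exI[of _ "\<lambda>j::nat. if j = 0 then fst u else snd u"])
      apply (cases u)
      apply (auto simp: numeral_2_eq_2 bsD_def wsmult_def mult_wcst1 wD_def)
      done
    subgoal for u
      apply (elim CollectE exE conjE)
      subgoal for c
        using spec[of _ 0, OF conjunct2[of True]] 
        apply (subgoal_tac "c 0 \<in> wvecs f \<and> c 1 \<in> wvecs f")
         apply (simp add: numeral_2_eq_2 bsD_def wsmult_def mult_wcst1 wD_def)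
        apply simp
        done
      done
    done
  show "\<forall>c. (\<forall>j<2. c j \<in> wvecs f) \<and> (\<Sum>j<2. wsmult (c j) (bsD f j)) = 0 \<longrightarrow> (\<forall>j<2. (c j :: nat \<Rightarrow> 'a) = 0)"
  proof (intro allI impI)
    fix c :: "nat \<Rightarrow> nat \<Rightarrow> 'a" and j :: nat
    assume h: "(\<forall>j<2. c j \<in> wvecs f) \<and> (\<Sum>j<2. wsmult (c j) (bsD f j)) = 0" and j: "j < 2"
    have "c 0 \<in> wvecs f" "c 1 \<in> wvecs f" using h by auto
    then have e: "c 0 * wcst f 1 = c 0" "c (Suc 0) * wcst f 1 = c (Suc 0)" using mult_wcst1 by auto
    have "(c 0, c 1) = 0" using h e by (simp add: numeral_2_eq_2 bsD_def wsmult_def)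
    then have "c 0 = 0" "c 1 = 0" by (simp_all add: zero_prod_def)
    then show "c j = 0" using j by (cases j) (auto simp: numeral_2_eq_2 less_Suc_eq)
  qed
qed

definition AD :: "nat \<Rightarrow> 'a::comm_ring_1 \<Rightarrow> 'a \<Rightarrow> nat \<Rightarrow> nat \<Rightarrow> nat \<Rightarrow> 'a" where
  "AD f q \<delta> = (\<lambda>i j. if i = 0 \<and> j = 0 then wcst f q else if i = 1 \<and> j = 1 then wcst f \<delta> else 0)"

lemma matrix_D: "wmatrix p f \<delta> 2 (bsD f) (AD f (of_nat p * \<delta>) (\<delta>::'a::field))"
  unfolding wmatrix_def
proof (intro conjI)
  show "\<forall>i<2. \<forall>j<2. AD f (of_nat p * \<delta>) \<delta> i j \<in> wvecs f"
    by (auto simp: AD_def wcst_def wvecs_def)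
  show "\<forall>j<2. wphi p f \<delta> (bsD f j) = (\<Sum>i<2. wsmult (AD f (of_nat p * \<delta>) \<delta> i j) (bsD f i))"
    by (auto simp: numeral_2_eq_2 less_Suc_eq AD_def bsD_def wphi_def wshift_wcst wshift_zero wcst_mult wsmult_def zero_prod_def)
qed

definition bsD2 :: "nat \<Rightarrow> nat \<Rightarrow> (nat \<Rightarrow> 'a::comm_ring_1) \<times> (nat \<Rightarrow> 'a)" where
  "bsD2 f = (\<lambda>j. (0, wcst f 1))"

lemma basis_D2: "wbasis f {(0::nat\<Rightarrow>'a::field, b::nat\<Rightarrow>'a) | b. b \<in> wvecs f} 1 (bsD2 f)"
  unfolding wbasis_def
proof (intro conjI)
  show "\<forall>j<1. bsD2 f j \<in> {(0::nat\<Rightarrow>'a::field, b::nat\<Rightarrow>'a) | b. b \<in> wvecs f}"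
    by (auto simp: bsD2_def wcst_vec)
  show "{(0::nat\<Rightarrow>'a::field, b::nat\<Rightarrow>'a) | b. b \<in> wvecs f} = {\<Sum>j<1. wsmult (c j) (bsD2 f j) | c. \<forall>j<1. c j \<in> wvecs f}"
    apply (rule Set.set_eqI, rule iffI)
    subgoal for u
      apply (elim CollectE exE conjE)
      subgoal for b
        apply (rule CollectI, rule exI[of _ "\<lambda>j::nat. b"])
        apply (auto simp: bsD2_def wsmult_def mult_wcst1)
        done
      done
    subgoal for u
      apply (elim CollectE exE conjE)
      subgoal for c
        apply (subgoal_tac "c 0 \<in> wvecs f")
         apply (simp add: bsD2_def wsmult_def mult_wcst1)
        apply simp
        done
      done
    done
  show "\<forall>c. (\<forall>j<1. c j \<in> wvecs f) \<and> (\<Sum>j<1. wsmult (c j) (bsD2 f j)) = 0 \<longrightarrow> (\<forall>j<1. (c j :: nat \<Rightarrow> 'a) = 0)"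
    by (auto simp: bsD2_def wsmult_def mult_wcst1 zero_prod_def)
qed

lemma matrix_D2: "wmatrix p f \<delta> 1 (bsD2 f) (\<lambda>i j. wcst f (\<delta>::'a::field))"
  unfolding wmatrix_def
  by (auto simp: wcst_vec bsD2_def wphi_def wshift_wcst wshift_zero wcst_mult wsmult_def)

lemma D2_props:
  fixes \<delta> :: "'a::field"
  shows "wsubmod f {(0::nat\<Rightarrow>'a, b::nat\<Rightarrow>'a) | b. b \<in> wvecs f}"
    and "wphi p f \<delta> ` {(0::nat\<Rightarrow>'a, b::nat\<Rightarrow>'a) | b. b \<in> wvecs f} \<subseteq> {(0::nat\<Rightarrow>'a, b::nat\<Rightarrow>'a) | b. b \<in> wvecs f}"
    and "wN ` {(0::nat\<Rightarrow>'a, b::nat\<Rightarrow>'a) | b. b \<in> wvecs f} \<subseteq> {(0::nat\<Rightarrow>'a, b::nat\<Rightarrow>'a) | b. b \<in> wvecs f}"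
proof -
  show "wsubmod f {(0::nat\<Rightarrow>'a, b::nat\<Rightarrow>'a) | b. b \<in> wvecs f}"
    unfolding wsubmod_def by (auto simp: wD_def wvecs_def wsmult_def zero_prod_def)
  show "wphi p f \<delta> ` {(0::nat\<Rightarrow>'a, b::nat\<Rightarrow>'a) | b. b \<in> wvecs f} \<subseteq> {(0::nat\<Rightarrow>'a, b::nat\<Rightarrow>'a) | b. b \<in> wvecs f}"
    by (auto simp: wphi_def wshift_zero wvecs_def wcst_def)
  show "wN ` {(0::nat\<Rightarrow>'a, b::nat\<Rightarrow>'a) | b. b \<in> wvecs f} \<subseteq> {(0::nat\<Rightarrow>'a, b::nat\<Rightarrow>'a) | b. b \<in> wvecs f}"
    by (auto simp: wN_def wvecs_def)
qed

lemma tN_D_val: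
  fixes bs :: "nat \<Rightarrow> (nat \<Rightarrow> 'a::field) \<times> (nat \<Rightarrow> 'a)" and v :: "'a \<Rightarrow> rat"
  assumes vm: "\<And>a b. a \<noteq> 0 \<Longrightarrow> b \<noteq> 0 \<Longrightarrow> v (a * b) = v a + v b"
    and vp: "v (of_nat p) = 1" and p0: "(of_nat p :: 'a) \<noteq> 0" and d: "\<delta> \<noteq> 0"
    and f: "0 < f" and B: "wbasis f (wD f) r bs" and M: "wmatrix p f \<delta> r bs A"
  shows "wtN v e f r A = of_nat e * (of_nat f * (1 + 2 * v \<delta>))"
proof -
  from tN_D[OF f B M] have r: "r = 2" and P: "(\<Prod>l<f. A 0 0 l * A 1 1 l - A 0 1 l * A 1 0 l) = (of_nat p * \<delta> * \<delta>) ^ f"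
    by auto
  have "(\<Prod>l<f. det (mat r r (\<lambda>(i,j). A i j l))) = (of_nat p * \<delta> * \<delta>) ^ f"
    unfolding r det2 using P by simp
  moreover have "v ((of_nat p * \<delta> * \<delta>) ^ f) = of_nat f * (1 + 2 * v \<delta>)"
  proof -
    have nz: "of_nat p * \<delta> \<noteq> 0" using p0 d by simp
    have "v (of_nat p * \<delta> * \<delta>) = v (of_nat p) + v \<delta> + v \<delta>"
      using vm[OF nz d] vm[OF p0 d] by simp
    moreover have "of_nat p * \<delta> * \<delta> \<noteq> 0" using nz d by simp
    ultimately show ?thesis using v_pow[of v, OF vm] vp by simp
  qed
  ultimately show ?thesis by (simp add: wtN_def)
qed

lemma tN_D2_val:
  fixes bs :: "nat \<Rightarrow> (nat \<Rightarrow> 'a::field) \<times> (nat \<Rightarrow> 'a)" and v :: "'a \<Rightarrow> rat"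
  assumes vm: "\<And>a b. a \<noteq> 0 \<Longrightarrow> b \<noteq> 0 \<Longrightarrow> v (a * b) = v a + v b"
    and d: "\<delta> \<noteq> 0"
    and f: "0 < f" and B: "wbasis f {(0::nat\<Rightarrow>'a, b::nat\<Rightarrow>'a) | b. b \<in> wvecs f} r bs" and M: "wmatrix p f \<delta> r bs A"
  shows "wtN v e f r A = of_nat e * (of_nat f * v \<delta>)"
proof -
  from tN_D2[OF f B M] have r: "r = 1" and P: "(\<Prod>l<f. A 0 0 l) = \<delta> ^ f" by auto
  have "(\<Prod>l<f. det (mat r r (\<lambda>(i,j). A i j l))) = \<delta> ^ f"
    unfolding r det1 using P by simp
  then show ?thesis using v_pow[of v, OF vm d] by (simp add: wtN_def)
qed

lemma tN_0_val:
  fixes bs :: "nat \<Rightarrow> (nat \<Rightarrow> 'a::field) \<times> (nat \<Rightarrow> 'a)" and v :: "'a \<Rightarrow> rat"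
  assumes vm: "\<And>a b. a \<noteq> 0 \<Longrightarrow> b \<noteq> 0 \<Longrightarrow> v (a * b) = v a + v b"
    and f: "0 < f" and B: "wbasis f {0} r bs"
  shows "wtN v e f r A = 0"
proof -
  have "prj 0 ` {0::(nat\<Rightarrow>'a)\<times>(nat\<Rightarrow>'a)} = {0}" by simp
  then have r: "r = 0" using basis_rank[OF B f] by simp
  have "(\<Prod>l<f. det (mat r r (\<lambda>(i,j). A i j l))) = 1"
    unfolding r det0 by simp
  then show ?thesis using v_one[of v, OF vm] by (simp add: wtN_def)
qed

lemma phi_fix:
  fixes a b :: "nat \<Rightarrow> 'a::field_char_0"
  assumes f: "0 < f" and d: "\<delta> \<noteq> 0" and p: "prime p"
    and av: "a \<in> wvecs f" and bv: "b \<in> wvecs f"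
    and eq: "wsmult (wcst f (of_nat p * \<delta>)) (a, b) = wphi p f \<delta> (a, b)"
  shows "a = wcst f (a 0) \<and> b = 0"
proof -
  have p1: "1 < p" by (rule prime_gt_1_nat[OF p])
  have p0: "(of_nat p :: 'a) \<noteq> 0" using p1 by simp
  define q where "q = (of_nat p * \<delta> :: 'a)"
  have q0: "q \<noteq> 0" using p0 d by (simp add: q_def)
  have E: "a (Suc i mod f) = a i \<and> b (Suc i mod f) = of_nat p * b i" if i: "i < f" for i
  proof -
    have e1: "(wcst f q * a) i = (wcst f q * wshift f 1 a) i"
      using eq by (simp add: wsmult_def wphi_def q_def)
    have e2: "(wcst f q * b) i = (wcst f \<delta> * wshift f 1 b) i"
      using eq by (simp add: wsmult_def wphi_def q_def)
    from e1 i have "q * a i = q * a (Suc i mod f)" by (simp add: wcst_def wshift_def)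
    then have A: "a (Suc i mod f) = a i" using q0 by simp
    from e2 i have "q * b i = \<delta> * b (Suc i mod f)" by (simp add: wcst_def wshift_def)
    then have "\<delta> * b (Suc i mod f) = \<delta> * (of_nat p * b i)" unfolding q_def by (metis mult.assoc mult.commute)
    then have B: "b (Suc i mod f) = of_nat p * b i" using mult_left_cancel[OF d] by blast
    show ?thesis using A B by simp
  qed
  have aconst: "i < f \<Longrightarrow> a i = a 0" for i
  proof (induction i)
    case 0 then show ?case by simp
  next
    case (Suc i)
    then have "a (Suc i mod f) = a i" using E[of i] by simp
    then show ?case using Suc by simp
  qed
  have bpow: "i < f \<Longrightarrow> b i = of_nat p ^ i * b 0" for i
  proof (induction i)
    case 0 then show ?case by simp
  next
    case (Suc i)
    then have "b (Suc i mod f) = of_nat p * b i" using E[of i] by simp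
    then show ?case using Suc by simp
  qed
  have "b 0 = of_nat p * b (f - 1)" using E[of "f - 1"] f by simp
  also have "\<dots> = of_nat p ^ f * b 0" using bpow[of "f - 1"] f
    by (simp add: power_eq_if)
  finally have "(of_nat p ^ f - 1) * b 0 = 0" by (simp add: algebra_simps)
  moreover have "(of_nat p ^ f :: 'a) \<noteq> 1"
  proof
    assume "(of_nat p ^ f :: 'a) = 1"
    then have "of_nat (p ^ f) = (1::'a)" by simp
    then have "p ^ f = 1" using of_nat_eq_1_iff by blast
    moreover have "1 < p ^ f" using one_less_power[OF p1 f] .
    ultimately show False by linarith
  qed
  ultimately have b00: "b 0 = 0" by simp
  have "b = 0"
  proof
    fix i show "b i = 0 i"
      using bpow[of i] b00 bv by (cases "i < f") (auto simp: wvecs_def)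
  qed
  moreover have "a = wcst f (a 0)"
  proof
    fix i show "a i = wcst f (a 0) i"
      using aconst[of i] av by (cases "i < f") (auto simp: wvecs_def wcst_def)
  qed
  ultimately show ?thesis by simp
qed

lemma wphi_u1: "wphi p f \<delta> (wcst f 1, 0) = wsmult (wcst f (of_nat p * \<delta>)) (wcst f (1::'a::comm_ring_1), 0)"
  by (simp add: wphi_def wsmult_def wshift_wcst wshift_zero wcst_mult)

lemma gact_zero:
  fixes ga :: "(nat\<Rightarrow>'a::comm_ring_1)\<times>(nat\<Rightarrow>'a) \<Rightarrow> (nat\<Rightarrow>'a)\<times>(nat\<Rightarrow>'a)"
  assumes add: "\<And>u w. u \<in> wD f \<Longrightarrow> w \<in> wD f \<Longrightarrow> ga (u + w) = ga u + ga w"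
  shows "ga 0 = (0::(nat\<Rightarrow>'a::comm_ring_1)\<times>(nat\<Rightarrow>'a))"
proof -
  have z: "(0::(nat\<Rightarrow>'a)\<times>(nat\<Rightarrow>'a)) \<in> wD f" by (simp add: wD_def wvecs_def zero_prod_def)
  have "ga (0::(nat\<Rightarrow>'a)\<times>(nat\<Rightarrow>'a)) = ga (0 + 0)" by simp
  also have "\<dots> = ga 0 + ga 0" using add[OF z z] .
  finally show ?thesis by simp
qed

theorem mainTheorem11:
  fixes p e f :: nat and v :: "'a::field_char_0 \<Rightarrow> rat" and \<delta> :: 'a
    and k :: "nat \<Rightarrow> int" and x y :: "nat \<Rightarrow> 'a"
    and G :: "('g, 'b) monoid_scheme" and nG :: "'g \<Rightarrow> nat" and prm :: "'g \<Rightarrow> nat \<Rightarrow> nat"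
    and gact :: "'g \<Rightarrow> (nat \<Rightarrow> 'a) \<times> (nat \<Rightarrow> 'a) \<Rightarrow> (nat \<Rightarrow> 'a) \<times> (nat \<Rightarrow> 'a)"
  assumes p_prime: "prime p"
    and v_mult: "\<And>a b. a \<noteq> 0 \<Longrightarrow> b \<noteq> 0 \<Longrightarrow> v (a * b) = v a + v b"
    and v_add: "\<And>a b. a \<noteq> 0 \<Longrightarrow> b \<noteq> 0 \<Longrightarrow> a + b \<noteq> 0 \<Longrightarrow> v (a + b) \<ge> min (v a) (v b)"
    and v_p: "v (of_nat p) = 1"
    and e_pos: "e > 0" and f_pos: "f > 0"
    and delta: "\<delta> \<noteq> 0"
    and x_vec: "x \<in> wvecs (e*f)" and y_vec: "y \<in> wvecs (e*f)"
    and xy_nz: "\<And>i. i < e*f \<Longrightarrow> (x i, y i) \<noteq> (0, 0)"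
    and k_nonneg: "\<And>i. i < e*f \<Longrightarrow> k i \<ge> 0"
    and G_group: "group G" and G_fin: "finite (carrier G)"
    and nG_hom: "\<And>g h. g \<in> carrier G \<Longrightarrow> h \<in> carrier G \<Longrightarrow>
                   nG (g \<otimes>\<^bsub>G\<^esub> h) mod f = (nG g + nG h) mod f"
    and pi_bij: "\<And>g. g \<in> carrier G \<Longrightarrow> bij_betw (prm g) {..<e*f} {..<e*f}"
    and pi_one: "\<And>i. i < e*f \<Longrightarrow> prm \<one>\<^bsub>G\<^esub> i = i"
    and pi_mult: "\<And>g h i. g \<in> carrier G \<Longrightarrow> h \<in> carrier G \<Longrightarrow> i < e*f \<Longrightarrow>
                   prm (g \<otimes>\<^bsub>G\<^esub> h) i = prm h (prm g i)"
    and pi_compat: "\<And>g i. g \<in> carrier G \<Longrightarrow> i < e*f \<Longrightarrow> prm g i mod f = (i + nG g) mod f"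
    and gact_closed: "\<And>g u. g \<in> carrier G \<Longrightarrow> u \<in> wD f \<Longrightarrow> gact g u \<in> wD f"
    and gact_add: "\<And>g u w. g \<in> carrier G \<Longrightarrow> u \<in> wD f \<Longrightarrow> w \<in> wD f \<Longrightarrow>
                   gact g (u + w) = gact g u + gact g w"
    and gact_semilin: "\<And>g a u. g \<in> carrier G \<Longrightarrow> a \<in> wvecs f \<Longrightarrow> u \<in> wD f \<Longrightarrow>
                   gact g (wsmult a u) = wsmult (wshift f (nG g) a) (gact g u)"
    and gact_one: "\<And>u. u \<in> wD f \<Longrightarrow> gact \<one>\<^bsub>G\<^esub> u = u"
    and gact_mult: "\<And>g h u. g \<in> carrier G \<Longrightarrow> h \<in> carrier G \<Longrightarrow> u \<in> wD f \<Longrightarrow>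
                   gact (g \<otimes>\<^bsub>G\<^esub> h) u = gact g (gact h u)"
    and gact_phi: "\<And>g u. g \<in> carrier G \<Longrightarrow> u \<in> wD f \<Longrightarrow>
                   gact g (wphi p f \<delta> u) = wphi p f \<delta> (gact g u)"
    and gact_N: "\<And>g u. g \<in> carrier G \<Longrightarrow> u \<in> wD f \<Longrightarrow> gact g (wN u) = wN (gact g u)"
    and gact_Fil: "\<And>g j. g \<in> carrier G \<Longrightarrow>
                   wgactL f (e*f) prm gact g ` wFil (e*f) k x y j \<subseteq> wFil (e*f) k x y j"
  shows "(\<exists>\<chi> :: 'g \<Rightarrow> 'a.
            (\<forall>g\<in>carrier G. \<chi> g \<noteq> 0)
          \<and> (\<forall>g\<in>carrier G. \<forall>h\<in>carrier G. \<chi> (g \<otimes>\<^bsub>G\<^esub> h) = \<chi> g * \<chi> h)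
          \<and> (\<forall>g\<in>carrier G. gact g (wcst f 1, 0) = (wcst f (\<chi> g), 0)
                            \<and> gact g (0, wcst f 1) = (0, wcst f (\<chi> g))))
     \<and> (wweakly_admissible v p \<delta> e f k x y \<longleftrightarrow>
          (2 * of_nat (e*f) * v \<delta> + of_nat (e*f) = of_int (\<Sum>i<e*f. k i)
           \<and> of_nat (e*f) * v \<delta> \<ge> of_int (\<Sum>i\<in>{i. i < e*f \<and> x i = 0}. k i)))
     \<and> (wweakly_admissible v p \<delta> e f k x y \<longrightarrow>
          (wirreducible v p \<delta> e f k x y (carrier G) gact \<longleftrightarrow>
             of_nat (e*f) * v \<delta> > of_int (\<Sum>i\<in>{i. i < e*f \<and> x i = 0}. k i)))
     \<and> (wweakly_admissible v p \<delta> e f k x y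
          \<and> of_nat (e*f) * v \<delta> = of_int (\<Sum>i\<in>{i. i < e*f \<and> x i = 0}. k i) \<longrightarrow>
          (let D2 = {(0, b) | b. b \<in> wvecs f} in
             wwa_sub v p \<delta> e f k x y (carrier G) gact D2 \<and> D2 \<noteq> wD f
           \<and> (\<forall>S. wwa_sub v p \<delta> e f k x y (carrier G) gact S \<and> S \<noteq> wD f \<longrightarrow> S = D2)))"
proof -
  define D2 where "D2 = {(0::nat\<Rightarrow>'a, b::nat\<Rightarrow>'a) | b. b \<in> wvecs f}"
  define SK where "SK = (\<Sum>i<e*f. k i)"
  define SX where "SX = (\<Sum>i\<in>{i. i < e*f \<and> x i = 0}. k i)"
  have p1: "1 < p" by (rule prime_gt_1_nat[OF p_prime])
  have p0: "(of_nat p :: 'a) \<noteq> 0" using p1 by simp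
  have pd: "of_nat p * \<delta> \<noteq> 0" using p0 delta by simp
  have xy': "\<And>s. s < e*f \<Longrightarrow> (x s, y s) \<noteq> (0, 0)" using xy_nz by blast
  have tHD: "wtH (e*f) k x y (wL f (e*f) (wD f)) = SK"
    unfolding wL_D[OF f_pos] SK_def by (rule tH_full_val[OF xy' k_nonneg])
  have tHD2: "wtH (e*f) k x y (wL f (e*f) D2) = SX"
  proof -
    have "wtH (e*f) k x y (wL f (e*f) D2) = (\<Sum>s<e*f. if x s = 0 then k s else 0)"
      unfolding D2_def wL_D2[OF f_pos] by (rule tH_D2_val[OF xy' k_nonneg])
    also have "\<dots> = (\<Sum>i\<in>{i \<in> {..<e*f}. x i = 0}. k i)"
      by (rule sum.inter_filter[symmetric]) simp
    also have "{i \<in> {..<e*f}. x i = 0} = {i. i < e*f \<and> x i = 0}" by auto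
    finally show ?thesis unfolding SX_def .
  qed
  have tH0: "wtH (e*f) k x y (wL f (e*f) {0}) = 0"
    unfolding wL_0 by (rule tH_zero_val)
  have tND: "wtN v e f r A = 2 * of_nat (e*f) * v \<delta> + of_nat (e*f)"
    if "wbasis f (wD f) r bs" "wmatrix p f \<delta> r bs A" for r bs A
    using tN_D_val[OF v_mult v_p p0 delta f_pos that] by (simp add: algebra_simps)
  have tND2: "wtN v e f r A = of_nat (e*f) * v \<delta>"
    if "wbasis f D2 r bs" "wmatrix p f \<delta> r bs A" for r bs A
    using tN_D2_val[OF v_mult delta f_pos, of r bs p A e] that unfolding D2_def by (simp add: algebra_simps)
  have tN0: "wtN v e f r A = 0" if "wbasis f ({0}::((nat\<Rightarrow>'a)\<times>(nat\<Rightarrow>'a)) set) r bs" for r bs A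
    using tN_0_val[OF v_mult f_pos that] .
  have cls: "S = {0} \<or> S = D2 \<or> S = wD f"
    if "wsubmod f S" "wphi p f \<delta> ` S \<subseteq> S" "wN ` S \<subseteq> S" for S
    using classify[OF f_pos delta pd that] unfolding D2_def .
  have D2p: "wsubmod f D2" "wphi p f \<delta> ` D2 \<subseteq> D2" "wN ` D2 \<subseteq> D2"
    unfolding D2_def by (rule D2_props)+
  have bD2: "wbasis f D2 1 (bsD2 f)" unfolding D2_def by (rule basis_D2)
  have mD2: "wmatrix p f \<delta> 1 (bsD2 f) (\<lambda>i j. wcst f \<delta>)" by (rule matrix_D2)
  have bD: "wbasis f (wD f) 2 (bsD f :: nat \<Rightarrow> (nat\<Rightarrow>'a)\<times>(nat\<Rightarrow>'a))" by (rule basis_D[OF f_pos])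
  have mD: "wmatrix p f \<delta> 2 (bsD f) (AD f (of_nat p * \<delta>) \<delta>)" by (rule matrix_D)

  have WA: "wweakly_admissible v p \<delta> e f k x y \<longleftrightarrow>
      (2 * of_nat (e*f) * v \<delta> + of_nat (e*f) = of_int SK \<and> of_nat (e*f) * v \<delta> \<ge> of_int SX)"
  proof
    assume W: "wweakly_admissible v p \<delta> e f k x y"
    have W1: "\<forall>r bs A. wbasis f (wD f) r bs \<and> wmatrix p f \<delta> r bs A \<longrightarrow>
        of_int (wtH (e*f) k x y (wL f (e*f) (wD f))) = wtN v e f r A"
      using W unfolding wweakly_admissible_def by (rule conjunct1)
    have W2: "\<forall>S. wsubmod f S \<and> wphi p f \<delta> ` S \<subseteq> S \<and> wN ` S \<subseteq> S \<longrightarrow>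
        (\<forall>r bs A. wbasis f S r bs \<and> wmatrix p f \<delta> r bs A \<longrightarrow>
           of_int (wtH (e*f) k x y (wL f (e*f) S)) \<le> wtN v e f r A)"
      using W unfolding wweakly_admissible_def by (rule conjunct2)
    have "of_int SK = wtN v e f 2 (AD f (of_nat p * \<delta>) \<delta>)"
      using W1 bD mD tHD by metis
    then have 1: "2 * of_nat (e*f) * v \<delta> + of_nat (e*f) = of_int SK" using tND[OF bD mD] by simp
    have "of_int SX \<le> wtN v e f 1 (\<lambda>i j. wcst f \<delta>)"
      using W2 D2p bD2 mD2 tHD2 by metis
    then have 2: "of_nat (e*f) * v \<delta> \<ge> of_int SX" using tND2[OF bD2 mD2] by simp
    show "2 * of_nat (e*f) * v \<delta> + of_nat (e*f) = of_int SK \<and> of_nat (e*f) * v \<delta> \<ge> of_int SX"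
      using 1 2 by simp
  next
    assume C: "2 * of_nat (e*f) * v \<delta> + of_nat (e*f) = of_int SK \<and> of_nat (e*f) * v \<delta> \<ge> of_int SX"
    show "wweakly_admissible v p \<delta> e f k x y"
      unfolding wweakly_admissible_def
    proof (intro conjI allI impI)
      fix r bs A assume h: "wbasis f (wD f) r bs \<and> wmatrix p f \<delta> r bs A"
      show "of_int (wtH (e*f) k x y (wL f (e*f) (wD f))) = wtN v e f r A"
        using tND[of r bs A] h C tHD by simp
    next
      fix S r bs A
      assume hS: "wsubmod f S \<and> wphi p f \<delta> ` S \<subseteq> S \<and> wN ` S \<subseteq> S"
        and h: "wbasis f S r bs \<and> wmatrix p f \<delta> r bs A"
      from cls[of S] hS have "S = {0} \<or> S = D2 \<or> S = wD f" by blast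
      then show "of_int (wtH (e*f) k x y (wL f (e*f) S)) \<le> wtN v e f r A"
      proof (elim disjE)
        assume "S = {0}" then show ?thesis using tN0[of r bs A] h tH0 by simp
      next
        assume "S = D2" then show ?thesis using tND2[of r bs A] h C tHD2 by simp
      next
        assume "S = wD f" then show ?thesis using tND[of r bs A] h C tHD by simp
      qed
    qed
  qed

  define \<chi> where "\<chi> = (\<lambda>g. fst (gact g (wcst f 1, 0)) 0)"
  have u1D: "(wcst f (1::'a), 0::nat\<Rightarrow>'a) \<in> wD f" by (simp add: wD_def wcst_def wvecs_def)
  have wNu1: "wN (wcst f (1::'a), 0::nat\<Rightarrow>'a) = (0, wcst f 1)" by (simp add: wN_def)
  have act: "gact g (wcst f 1, 0) = (wcst f (\<chi> g), 0) \<and> gact g (0, wcst f 1) = (0, wcst f (\<chi> g))"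
    if g: "g \<in> carrier G" for g
  proof -
    obtain a b where ab: "gact g (wcst f 1, 0) = (a, b)" by (cases "gact g (wcst f 1, 0)") auto
    have abD: "(a, b) \<in> wD f" using gact_closed[OF g u1D] ab by simp
    then have av: "a \<in> wvecs f" and bv: "b \<in> wvecs f" by (auto simp: wD_def)
    have "wsmult (wcst f (of_nat p * \<delta>)) (a, b) = gact g (wsmult (wcst f (of_nat p * \<delta>)) (wcst f 1, 0))"
      using gact_semilin[OF g wcst_vec u1D] ab by (simp add: wshift_wcst)
    also have "\<dots> = gact g (wphi p f \<delta> (wcst f 1, 0))" by (simp add: wphi_u1)
    also have "\<dots> = wphi p f \<delta> (a, b)" using gact_phi[OF g u1D] ab by simp
    finally have "a = wcst f (a 0) \<and> b = 0" by (rule phi_fix[OF f_pos delta p_prime av bv])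
    then have 1: "gact g (wcst f 1, 0) = (wcst f (\<chi> g), 0)" using ab by (simp add: \<chi>_def)
    have "gact g (0, wcst f 1) = gact g (wN (wcst f 1, 0))" by (simp add: wNu1)
    also have "\<dots> = wN (gact g (wcst f 1, 0))" by (rule gact_N[OF g u1D])
    also have "\<dots> = (0, wcst f (\<chi> g))" using 1 by (simp add: wN_def)
    finally show ?thesis using 1 by simp
  qed
  have chi_mult: "\<chi> (g \<otimes>\<^bsub>G\<^esub> h) = \<chi> g * \<chi> h" if g: "g \<in> carrier G" and h: "h \<in> carrier G" for g h
  proof -
    have "gact (g \<otimes>\<^bsub>G\<^esub> h) (wcst f 1, 0) = gact g (gact h (wcst f 1, 0))" by (rule gact_mult[OF g h u1D])
    also have "\<dots> = gact g (wsmult (wcst f (\<chi> h)) (wcst f 1, 0))"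
      using act[OF h] by (simp add: wsmult_def wcst_mult)
    also have "\<dots> = wsmult (wcst f (\<chi> h)) (gact g (wcst f 1, 0))"
      using gact_semilin[OF g wcst_vec u1D] by (simp add: wshift_wcst)
    also have "\<dots> = (wcst f (\<chi> h * \<chi> g), 0)" using act[OF g] by (simp add: wsmult_def wcst_mult)
    finally have "\<chi> (g \<otimes>\<^bsub>G\<^esub> h) = fst (wcst f (\<chi> h * \<chi> g), 0::nat\<Rightarrow>'a) 0" by (simp add: \<chi>_def)
    then show ?thesis using f_pos by (simp add: wcst_def mult.commute)
  qed
  have chi_one: "\<chi> \<one>\<^bsub>G\<^esub> = 1" using gact_one[OF u1D] f_pos by (simp add: \<chi>_def wcst_def)
  have chi_nz: "\<chi> g \<noteq> 0" if g: "g \<in> carrier G" for g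
  proof
    assume z: "\<chi> g = 0"
    have ig: "inv\<^bsub>G\<^esub> g \<in> carrier G" by (rule group.inv_closed[OF G_group g])
    have "\<chi> (inv\<^bsub>G\<^esub> g \<otimes>\<^bsub>G\<^esub> g) = \<chi> (inv\<^bsub>G\<^esub> g) * \<chi> g" by (rule chi_mult[OF ig g])
    moreover have "inv\<^bsub>G\<^esub> g \<otimes>\<^bsub>G\<^esub> g = \<one>\<^bsub>G\<^esub>" by (rule group.l_inv[OF G_group g])
    ultimately show False using z chi_one by simp
  qed
  have CHI: "\<exists>\<chi> :: 'g \<Rightarrow> 'a.
            (\<forall>g\<in>carrier G. \<chi> g \<noteq> 0)
          \<and> (\<forall>g\<in>carrier G. \<forall>h\<in>carrier G. \<chi> (g \<otimes>\<^bsub>G\<^esub> h) = \<chi> g * \<chi> h)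
          \<and> (\<forall>g\<in>carrier G. gact g (wcst f 1, 0) = (wcst f (\<chi> g), 0)
                            \<and> gact g (0, wcst f 1) = (0, wcst f (\<chi> g)))"
    using chi_nz chi_mult act by blast

  have D2G: "\<forall>g\<in>carrier G. gact g ` D2 \<subseteq> D2"
  proof (intro ballI subsetI)
    fix g w assume g: "g \<in> carrier G" and w: "w \<in> gact g ` D2"
    then obtain u where u: "w = gact g u" "u \<in> D2" by blast
    then obtain b where b: "u = (0, b)" "b \<in> wvecs f" unfolding D2_def by blast
    have u2D: "(0::nat\<Rightarrow>'a, wcst f (1::'a)) \<in> wD f" by (simp add: wD_def wcst_def wvecs_def)
    have "u = wsmult b (0, wcst f 1)" using b by (simp add: wsmult_def mult_wcst1)
    then have "w = wsmult (wshift f (nG g) b) (gact g (0, wcst f 1))"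
      using u(1) gact_semilin[OF g b(2) u2D] by simp
    also have "\<dots> = (0, wshift f (nG g) b * wcst f (\<chi> g))" using act[OF g] by (simp add: wsmult_def)
    finally have "w = (0, wshift f (nG g) b * wcst f (\<chi> g))" .
    moreover have "wshift f (nG g) b * wcst f (\<chi> g) \<in> wvecs f" by (simp add: wvecs_def wcst_def)
    ultimately show "w \<in> D2" unfolding D2_def by blast
  qed

  have D2ne: "D2 \<noteq> wD f"
  proof
    assume "D2 = wD f"
    then have "(wcst f (1::'a), 0::nat\<Rightarrow>'a) \<in> D2" using u1D by simp
    then have "wcst f (1::'a) = 0" unfolding D2_def by blast
    then have "wcst f (1::'a) 0 = 0" by simp
    then show False using f_pos by (simp add: wcst_def)
  qed
  have D2n0: "D2 \<noteq> {0}"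
  proof
    assume "D2 = {0}"
    moreover have "(0::nat\<Rightarrow>'a, wcst f (1::'a)) \<in> D2" unfolding D2_def by (simp add: wcst_vec)
    ultimately have "wcst f (1::'a) = 0" by (simp add: zero_prod_def)
    then have "wcst f (1::'a) 0 = 0" by simp
    then show False using f_pos by (simp add: wcst_def)
  qed

  have wwa: "wwa_sub v p \<delta> e f k x y (carrier G) gact S \<and> S \<noteq> wD f \<longleftrightarrow> S = D2 \<and> of_int SX = of_nat (e*f) * v \<delta>" for S
  proof
    assume h: "wwa_sub v p \<delta> e f k x y (carrier G) gact S \<and> S \<noteq> wD f"
    then have hs: "wsubmod f S" "S \<noteq> {0}" "wphi p f \<delta> ` S \<subseteq> S" "wN ` S \<subseteq> S"
      and ex: "\<exists>r bs A. wbasis f S r bs \<and> wmatrix p f \<delta> r bs A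
          \<and> of_int (wtH (e*f) k x y (wL f (e*f) S)) = wtN v e f r A"
      unfolding wwa_sub_def by blast+
    have SD2: "S = D2" using cls[OF hs(1,3,4)] hs(2) h by blast
    from ex obtain r bs A where "wbasis f S r bs" "wmatrix p f \<delta> r bs A"
        "of_int (wtH (e*f) k x y (wL f (e*f) S)) = wtN v e f r A" by blast
    then have "of_int SX = of_nat (e*f) * v \<delta>" using tND2 tHD2 SD2 by simp
    then show "S = D2 \<and> of_int SX = of_nat (e*f) * v \<delta>" using SD2 by simp
  next
    assume h: "S = D2 \<and> of_int SX = of_nat (e*f) * v \<delta>"
    have "wwa_sub v p \<delta> e f k x y (carrier G) gact D2"
      unfolding wwa_sub_def
    proof (intro conjI)
      show "\<exists>r bs A. wbasis f D2 r bs \<and> wmatrix p f \<delta> r bs A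
          \<and> of_int (wtH (e*f) k x y (wL f (e*f) D2)) = wtN v e f r A"
        apply (rule exI[of _ 1], rule exI[of _ "bsD2 f"], rule exI[of _ "\<lambda>i j. wcst f \<delta>"])
        using bD2 mD2 tND2[OF bD2 mD2] tHD2 h by simp
    qed (use D2p D2G D2n0 in auto)
    then show "wwa_sub v p \<delta> e f k x y (carrier G) gact S \<and> S \<noteq> wD f" using h D2ne by simp
  qed

  show ?thesis
  proof (intro conjI)
    show "\<exists>\<chi> :: 'g \<Rightarrow> 'a.
            (\<forall>g\<in>carrier G. \<chi> g \<noteq> 0)
          \<and> (\<forall>g\<in>carrier G. \<forall>h\<in>carrier G. \<chi> (g \<otimes>\<^bsub>G\<^esub> h) = \<chi> g * \<chi> h)
          \<and> (\<forall>g\<in>carrier G. gact g (wcst f 1, 0) = (wcst f (\<chi> g), 0)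
                            \<and> gact g (0, wcst f 1) = (0, wcst f (\<chi> g)))" by (rule CHI)
    show "wweakly_admissible v p \<delta> e f k x y \<longleftrightarrow>
          (2 * of_nat (e*f) * v \<delta> + of_nat (e*f) = of_int (\<Sum>i<e*f. k i)
           \<and> of_nat (e*f) * v \<delta> \<ge> of_int (\<Sum>i\<in>{i. i < e*f \<and> x i = 0}. k i))"
      using WA unfolding SK_def SX_def .
    show "wweakly_admissible v p \<delta> e f k x y \<longrightarrow>
          (wirreducible v p \<delta> e f k x y (carrier G) gact \<longleftrightarrow>
             of_nat (e*f) * v \<delta> > of_int (\<Sum>i\<in>{i. i < e*f \<and> x i = 0}. k i))"
    proof
      assume W: "wweakly_admissible v p \<delta> e f k x y"
      then have le: "of_nat (e*f) * v \<delta> \<ge> of_int SX" using WA by simp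
      have "wirreducible v p \<delta> e f k x y (carrier G) gact \<longleftrightarrow> \<not> (of_int SX = of_nat (e*f) * v \<delta>)"
        unfolding wirreducible_def using wwa by blast
      also have "\<dots> \<longleftrightarrow> of_nat (e*f) * v \<delta> > of_int SX" using le by auto
      finally show "wirreducible v p \<delta> e f k x y (carrier G) gact \<longleftrightarrow>
             of_nat (e*f) * v \<delta> > of_int (\<Sum>i\<in>{i. i < e*f \<and> x i = 0}. k i)" unfolding SX_def .
    qed
    show "wweakly_admissible v p \<delta> e f k x y
          \<and> of_nat (e*f) * v \<delta> = of_int (\<Sum>i\<in>{i. i < e*f \<and> x i = 0}. k i) \<longrightarrow>
          (let D2 = {(0, b) | b. b \<in> wvecs f} in
             wwa_sub v p \<delta> e f k x y (carrier G) gact D2 \<and> D2 \<noteq> wD f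
           \<and> (\<forall>S. wwa_sub v p \<delta> e f k x y (carrier G) gact S \<and> S \<noteq> wD f \<longrightarrow> S = D2))"
    proof
      assume h: "wweakly_admissible v p \<delta> e f k x y
          \<and> of_nat (e*f) * v \<delta> = of_int (\<Sum>i\<in>{i. i < e*f \<and> x i = 0}. k i)"
      then have eq: "of_int SX = of_nat (e*f) * v \<delta>" unfolding SX_def by simp
      have "wwa_sub v p \<delta> e f k x y (carrier G) gact D2 \<and> D2 \<noteq> wD f
           \<and> (\<forall>S. wwa_sub v p \<delta> e f k x y (carrier G) gact S \<and> S \<noteq> wD f \<longrightarrow> S = D2)"
        using wwa eq by blast
      then show "let D2 = {(0, b) | b. b \<in> wvecs f} in
             wwa_sub v p \<delta> e f k x y (carrier G) gact D2 \<and> D2 \<noteq> wD f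
           \<and> (\<forall>S. wwa_sub v p \<delta> e f k x y (carrier G) gact S \<and> S \<noteq> wD f \<longrightarrow> S = D2)"
        unfolding Let_def D2_def .
    qed
  qed
qed

end
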